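(* Let $\beta$ be an ordered partition of $N$, $\zeta\in(\mathfrak t')^*_\beta$, $w\in W^\beta$, and $i\in\{1,\dots,N-1\}$ with $\alpha_i\in\bar\Pi\cap w(\bar R_{\beta,+})$. Then $s_i\cdot\varphi_w\cdot{\bf 1}_\zeta=\varphi_w\cdot{\bf 1}_\zeta$ in $\mathcal Y_\beta(\zeta)$.
   Context: Fix an integer $N\ge2$. Let $\bar{\mathfrak t}=\bigoplus_{i=1}^N\mathbb C\epsilon_i^\vee$, $\mathfrak t'=\bar{\mathfrak t}\oplus\mathbb Cc$, and let $\epsilon_1,\dots,\epsilon_N\in\bar{\mathfrak t}^*$ be the dual basis; regard $\bar{\mathfrak t}^*\subset(\mathfrak t')^*=\bar{\mathfrak t}^*\oplus\mathbb Cc^*$ with $\epsilon_i(c)=0$, $c^*(c)=1$, $c^*(\bar{\mathfrak t})=0$. Put $(\epsilon_i,\epsilon_j)=\delta_{ij}$ and, for $\zeta\in(\mathfrak t')^*$ and $\bar\alpha=\sum_ia_i\epsilon_i$, $(\zeta,\bar\alpha)=\sum_ia_i\zeta(\epsilon_i^\vee)$. Let $\bar R=\{\alpha_{ij}=\epsilon_i-\epsilon_j:i\ne j\}$, $\bar R_+=\{\alpha_{ij}:i<j\}$, $\alpha_i=\alpha_{i,i+1}$ ($1\le i\le N-1$), $\bar\Pi=\{\alpha_1,\dots,\alpha_{N-1}\}$. With a formal symbol $\delta$, the affine roots are $R=\{\bar\alpha+k\delta:\bar\alpha\in\bar R,k\in\mathbb Z\}$, $R_+=\{\bar\alpha+k\delta:\bar\alpha\in\bar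 R_+,k\ge0\}\cup\{-\bar\alpha+k\delta:\bar\alpha\in\bar R_+,k>0\}$, $R_-=R\setminus R_+$, and $\alpha_0=\delta-\alpha_{1N}$; indices $0,\dots,N-1$ are read modulo $N$. For $\alpha=\bar\alpha+k\delta\in R$ and $\zeta\in(\mathfrak t')^*$ set $(\zeta,\alpha)=(\zeta,\bar\alpha)+k\zeta(c)$; the coroot is $\alpha^\vee=\bar\alpha^\vee+kc\in\mathfrak t'$, where $(\epsilon_i-\epsilon_j)^\vee=\epsilon_i^\vee-\epsilon_j^\vee$, and $\alpha(\xi):=\bar\alpha(\xi)$ for $\xi\in\mathfrak t'$. Let $\bar P=\bigoplus_i\mathbb Z\epsilon_i$, $\bar W=\mathfrak S_N$ acting on indices ($w(\epsilon_i)=\epsilon_{w(i)}$, $w(\epsilon_i^\vee)=\epsilon^\vee_{w(i)}$, $w(c)=c$, $w(c^* )=c^*$), and $W=\bar W\ltimes\bar P$ with elements $wt_\eta$ and $wt_\eta w^{-1}=t_{w(\eta)}$. $W$ acts on $R$ by $w(\bar\alpha+k\delta)=w(\bar\alpha)+k\delta$, $t_\eta(\bar\alpha+k\delta)=\bar\alpha+(k-(\eta,\bar\alpha))\delta$; on $\mathfrak t'$ by $t_\eta(\xi)=\xi-\eta(\xi)c$; and on $(\mathfrak t')^*$ by the affine action $t_\eta(\zeta)=\zeta+\zeta(c)\eta$. For $\alpha=\bar\alpha+k\delta\in R$ let $s_\alpha=t_{-k\bar\alpha}s_{\bar\alpha}$, $s_i=s_{\alpha_i}$, $\pi=t_{\epsilon_1}s_1\cdots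 s_{N-1}$; $W$ is generated by $s_0,\dots,s_{N-1},\pi^{\pm1}$. $S(w)=R_+\cap w^{-1}(R_-)$, $l(w)=\#S(w)$, reduced expressions $w=\pi^ks_{j_1}\cdots s_{j_l}$ have $l=l(w)$. The degenerate double affine Hecke algebra $\mathcal H$ is the unital associative $\mathbb C$-algebra equal to $\mathbb C[W]\otimes S[\mathfrak t']$ as a vector space (via multiplication), in which $\mathbb C[W]$ and $S[\mathfrak t']$ are subalgebras and $s_i\xi-s_i(\xi)s_i=-\alpha_i(\xi)$ ($0\le i\le N-1$, $\xi\in\mathfrak t'$), $\pi\xi=\pi(\xi)\pi$. Intertwiners: $\varphi_i=1+s_i\alpha_i^\vee$, $\varphi_\pi=\pi$, $\varphi_w=\varphi_\pi^k\varphi_{j_1}\cdots\varphi_{j_l}$ for a reduced expression $w=\pi^ks_{j_1}\cdots s_{j_l}$. An ordered partition $\beta$ of $N$ gives blocks of consecutive indices of sizes $\beta_1,\dots,\beta_r$; $\bar R_\beta=\{\alpha_{ij}:i,j\text{ in the same block}\}$, $\bar R_{\beta,+}=\bar R_\beta\cap\bar R_+$, $\bar\Pi_\beta=\bar\Pi\cap\bar R_\beta$, $\bar W_\beta=\langle s_\alpha:\alpha\in\bar\Pi_\beta\rangle$; $\mathcal H_\beta$ is the subalgebra generated by $S[\mathfrak t']$ and $\bar W_\beta$. $(\mathfrak t')^*_\beta=\{\zeta\in(\mathfrak t')^*:(\zeta,\alpha)=-1\ \forall\alpha\in\bar\Pi_\beta\}$. For such $\zeta$, $\mathbb C1_\zeta$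 is the one-dimensional $\mathcal H_\beta$-module with $w1_\zeta=1_\zeta$ ($w\in\bar W_\beta$), $\xi1_\zeta=\zeta(\xi)1_\zeta$; $\mathcal Y_\beta(\zeta)=\mathcal H\otimes_{\mathcal H_\beta}\mathbb C1_\zeta$ with ${\bf 1}_\zeta=1\otimes1_\zeta$. $W^\beta=\{w\in W:l(wu)\ge l(w)\ \forall u\in\bar W_\beta\}$. *)

theory Defs
  imports "HOL-Combinatorics.Combinatorics" Complex_Main
begin

text \<open>An element w t_eta of W is encoded as the pair (w, eta), where w is a
permutation of {1..N} (identity elsewhere) and eta : nat => int is the
coefficient vector of eta = sum_i eta_i eps_i (zero outside {1..N}).\<close>

type_synonym Welt = "(nat \<Rightarrow> nat) \<times> (nat \<Rightarrow> int)"

definition Wset :: "nat \<Rightarrow> Welt set" where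
  "Wset N = {(w, eta). w permutes {1..N} \<and> (\<forall>j. j \<notin> {1..N} \<longrightarrow> eta j = 0)}"

text \<open>(w t_eta)(u t_mu) = (wu) t_(u^{-1}(eta) + mu), and (u^{-1} eta)_j = eta_(u j).\<close>
definition Wmult :: "Welt \<Rightarrow> Welt \<Rightarrow> Welt" where
  "Wmult a b = (fst a \<circ> fst b, \<lambda>j. snd a (fst b j) + snd b j)"

definition Wone :: Welt where
  "Wone = (id, \<lambda>_. 0)"

definition Winv :: "Welt \<Rightarrow> Welt" where
  "Winv a = (inv (fst a), \<lambda>j. - snd a (inv (fst a) j))"

definition Wprod :: "Welt list \<Rightarrow> Welt" where
  "Wprod xs = foldr Wmult xs Wone"

definition Wpow :: "Welt \<Rightarrow> int \<Rightarrow> Welt" where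
  "Wpow a k = (if 0 \<le> k then (Wmult a ^^ nat k) Wone else (Wmult (Winv a) ^^ nat (- k)) Wone)"

definition Wt :: "(nat \<Rightarrow> int) \<Rightarrow> Welt" where
  "Wt eta = (id, eta)"

definition ind :: "nat \<Rightarrow> nat \<Rightarrow> int" where
  "ind i = (\<lambda>l. if l = i then 1 else 0)"

definition sbar :: "nat \<Rightarrow> nat \<Rightarrow> Welt" where
  "sbar i j = (transpose i j, \<lambda>_. 0)"

text \<open>An affine root eps_i - eps_j + k delta is encoded as (i, j, k).\<close>
type_synonym root = "nat \<times> nat \<times> int"

definition Rset :: "nat \<Rightarrow> root set" where
  "Rset N = {(i, j, k). i \<in> {1..N} \<and> j \<in> {1..N} \<and> i \<noteq> j}"

definition Rpos :: "nat \<Rightarrow> root set" where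
  "Rpos N = {(i, j, k) \<in> Rset N. (i < j \<and> 0 \<le> k) \<or> (j < i \<and> 0 < k)}"

definition Rneg :: "nat \<Rightarrow> root set" where
  "Rneg N = Rset N - Rpos N"

text \<open>s_alpha = t_{-k alpha_bar} s_{alpha_bar} for alpha = alpha_bar + k delta\<close>
definition s_root :: "root \<Rightarrow> Welt" where
  "s_root r = (case r of (i, j, k) \<Rightarrow>
      Wmult (Wt (\<lambda>l. - k * (ind i l - ind j l))) (sbar i j))"

text \<open>simple roots: alpha_0 = delta - alpha_{1N} = eps_N - eps_1 + delta, alpha_i = eps_i - eps_{i+1}\<close>
definition alpha_simple :: "nat \<Rightarrow> nat \<Rightarrow> root" where
  "alpha_simple N i = (if i = 0 then (N, 1, 1) else (i, Suc i, 0))"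

definition sgen :: "nat \<Rightarrow> nat \<Rightarrow> Welt" where
  "sgen N i = s_root (alpha_simple N i)"

definition piW :: "nat \<Rightarrow> Welt" where
  "piW N = Wmult (Wt (ind 1)) (Wprod (map (sgen N) [1..<N]))"

text \<open>action of W on affine roots: w t_eta (alpha_bar + k delta)
  = w(alpha_bar) + (k - (eta, alpha_bar)) delta\<close>
definition Wact_root :: "Welt \<Rightarrow> root \<Rightarrow> root" where
  "Wact_root a r = (case r of (i, j, k) \<Rightarrow>
      (fst a i, fst a j, k - (snd a i - snd a j)))"

definition lengthW :: "nat \<Rightarrow> Welt \<Rightarrow> nat" where
  "lengthW N a = card {r \<in> Rpos N. Wact_root a r \<in> Rneg N}"

text \<open>xi = sum_i x_i eps_i^vee + cc c is encoded as (x, cc), x zero outside {1..N}.\<close>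
type_synonym tvec = "(nat \<Rightarrow> complex) \<times> complex"

definition tset :: "nat \<Rightarrow> tvec set" where
  "tset N = {(x, cc). \<forall>j. j \<notin> {1..N} \<longrightarrow> x j = 0}"

text \<open>w t_eta (xi) = w(xi - eta(xi) c)\<close>
definition Wact_t :: "nat \<Rightarrow> Welt \<Rightarrow> tvec \<Rightarrow> tvec" where
  "Wact_t N a xi = (\<lambda>j. fst xi (inv (fst a) j),
                    snd xi - (\<Sum>l\<in>{1..N}. of_int (snd a l) * fst xi l))"

definition coroot :: "root \<Rightarrow> tvec" where
  "coroot r = (case r of (i, j, k) \<Rightarrow> (\<lambda>l. of_int (ind i l - ind j l), of_int k))"

text \<open>alpha(xi) = alpha_bar(xi)\<close>
definition root_eval :: "root \<Rightarrow> tvec \<Rightarrow> complex" where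
  "root_eval r xi = (case r of (i, j, k) \<Rightarrow> fst xi i - fst xi j)"

text \<open>zeta in (t')^* is encoded by (z, zc) with z i = zeta(eps_i^vee), zc = zeta(c).\<close>
definition zeta_eval :: "nat \<Rightarrow> (nat \<Rightarrow> complex) \<times> complex \<Rightarrow> tvec \<Rightarrow> complex" where
  "zeta_eval N zeta xi = (\<Sum>l\<in>{1..N}. fst zeta l * fst xi l) + snd zeta * snd xi"

definition ordered_partition :: "nat \<Rightarrow> nat list \<Rightarrow> bool" where
  "ordered_partition N beta \<longleftrightarrow> (\<forall>b\<in>set beta. 0 < b) \<and> sum_list beta = N"

definition psum :: "nat list \<Rightarrow> nat \<Rightarrow> nat" where
  "psum beta m = sum_list (take m beta)"

definition same_block :: "nat list \<Rightarrow> nat \<Rightarrow> nat \<Rightarrow> bool" where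
  "same_block beta i j \<longleftrightarrow> (\<exists>m < length beta.
      psum beta m < i \<and> i \<le> psum beta (Suc m) \<and> psum beta m < j \<and> j \<le> psum beta (Suc m))"

text \<open>indices i of the simple roots alpha_i in Pi_beta\<close>
definition Pi_beta :: "nat \<Rightarrow> nat list \<Rightarrow> nat set" where
  "Pi_beta N beta = {i \<in> {1..<N}. same_block beta i (Suc i)}"

text \<open>R_bar_{beta,+}, as affine roots with k = 0\<close>
definition Rbeta_pos :: "nat \<Rightarrow> nat list \<Rightarrow> root set" where
  "Rbeta_pos N beta = {(i, j, 0) | i j. 1 \<le> i \<and> i < j \<and> j \<le> N \<and> same_block beta i j}"

inductive_set Wbar_beta :: "nat \<Rightarrow> nat list \<Rightarrow> Welt set" for N beta where
  one: "Wone \<in> Wbar_beta N beta"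
| step: "a \<in> Wbar_beta N beta \<Longrightarrow> i \<in> Pi_beta N beta \<Longrightarrow> Wmult (sgen N i) a \<in> Wbar_beta N beta"

definition Wbeta_min :: "nat \<Rightarrow> nat list \<Rightarrow> Welt set" where
  "Wbeta_min N beta = {a \<in> Wset N. \<forall>u \<in> Wbar_beta N beta. lengthW N a \<le> lengthW N (Wmult a u)}"

definition zeta_beta :: "nat \<Rightarrow> nat list \<Rightarrow> ((nat \<Rightarrow> complex) \<times> complex) set" where
  "zeta_beta N beta = {zeta. \<forall>i \<in> Pi_beta N beta. fst zeta i - fst zeta (Suc i) = -1}"

text \<open>Image of xi in S[t'] under the algebra map determined by Y i (= eps_i^vee) and Z (= c).\<close>
definition hmap :: "(complex \<Rightarrow> 'a::ring_1) \<Rightarrow> (nat \<Rightarrow> 'a) \<Rightarrow> 'a \<Rightarrow> nat \<Rightarrow> tvec \<Rightarrow> 'a" where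
  "hmap \<iota> Y Z N xi = (\<Sum>l\<in>{1..N}. \<iota> (fst xi l) * Y l) + \<iota> (snd xi) * Z"

text \<open>(\<iota>, g, Y, Z) is an algebra homomorphism from the degenerate DAHA H into the
  complex algebra 'a (complex scalars acting through the central ring map \<iota>):
  the defining relations of H hold for the images of the generators.\<close>
definition dDAHA_hom :: "nat \<Rightarrow> (complex \<Rightarrow> 'a::ring_1) \<Rightarrow> (Welt \<Rightarrow> 'a) \<Rightarrow> (nat \<Rightarrow> 'a) \<Rightarrow> 'a \<Rightarrow> bool" where
  "dDAHA_hom N \<iota> g Y Z \<longleftrightarrow>
     \<iota> 1 = 1 \<and> (\<forall>a b. \<iota> (a + b) = \<iota> a + \<iota> b) \<and> (\<forall>a b. \<iota> (a * b) = \<iota> a * \<iota> b) \<and>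
     (\<forall>a x. \<iota> a * x = x * \<iota> a) \<and>
     g Wone = 1 \<and> (\<forall>a \<in> Wset N. \<forall>b \<in> Wset N. g (Wmult a b) = g a * g b) \<and>
     (\<forall>i j. Y i * Y j = Y j * Y i) \<and> (\<forall>i. Y i * Z = Z * Y i) \<and>
     (\<forall>xi \<in> tset N. \<forall>i < N.
        g (sgen N i) * hmap \<iota> Y Z N xi - hmap \<iota> Y Z N (Wact_t N (sgen N i) xi) * g (sgen N i)
          = - \<iota> (root_eval (alpha_simple N i) xi)) \<and>
     (\<forall>xi \<in> tset N. g (piW N) * hmap \<iota> Y Z N xi = hmap \<iota> Y Z N (Wact_t N (piW N) xi) * g (piW N))"

definition is_module :: "('a::ring_1 \<Rightarrow> 'm::ab_group_add \<Rightarrow> 'm) \<Rightarrow> bool" where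
  "is_module act \<longleftrightarrow>
     (\<forall>a b m. act (a + b) m = act a m + act b m) \<and>
     (\<forall>a m n. act a (m + n) = act a m + act a n) \<and>
     (\<forall>a b m. act (a * b) m = act a (act b m)) \<and>
     (\<forall>m. act 1 m = m)"

definition phi_gen :: "nat \<Rightarrow> (complex \<Rightarrow> 'a::ring_1) \<Rightarrow> (Welt \<Rightarrow> 'a) \<Rightarrow> (nat \<Rightarrow> 'a) \<Rightarrow> 'a \<Rightarrow> nat \<Rightarrow> 'a" where
  "phi_gen N \<iota> g Y Z j = 1 + g (sgen N j) * hmap \<iota> Y Z N (coroot (alpha_simple N j))"

text \<open>phi for the expression pi^k s_{j1} ... s_{jl}\<close>
definition phi_expr :: "nat \<Rightarrow> (complex \<Rightarrow> 'a::ring_1) \<Rightarrow> (Welt \<Rightarrow> 'a) \<Rightarrow> (nat \<Rightarrow> 'a) \<Rightarrow> 'a \<Rightarrow> int \<Rightarrow> nat list \<Rightarrow> 'a" where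
  "phi_expr N \<iota> g Y Z k js = g (Wpow (piW N) k) * foldr (\<lambda>j acc. phi_gen N \<iota> g Y Z j * acc) js 1"

definition reduced_expr :: "nat \<Rightarrow> Welt \<Rightarrow> int \<Rightarrow> nat list \<Rightarrow> bool" where
  "reduced_expr N w k js \<longleftrightarrow> set js \<subseteq> {0..<N} \<and>
     w = Wmult (Wpow (piW N) k) (Wprod (map (sgen N) js)) \<and> length js = lengthW N w"

end

theory Submission
  imports Defs
begin


definition negr :: "root \<Rightarrow> root" where
  "negr r = (case r of (i, j, k) \<Rightarrow> (j, i, - k))"

definition Wof :: "nat \<Rightarrow> nat list \<Rightarrow> Welt" where
  "Wof N u = Wprod (map (sgen N) u)"

lemma Wmult_assoc: "Wmult (Wmult a b) c = Wmult a (Wmult b c)"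
  by (simp add: Wmult_def o_assoc add.assoc)

lemma Wmult_Wone_left[simp]: "Wmult Wone a = a"
  by (simp add: Wmult_def Wone_def)

lemma Wmult_Wone_right[simp]: "Wmult a Wone = a"
  by (simp add: Wmult_def Wone_def)

lemma Wone_Wset[simp]: "Wone \<in> Wset N"
  by (simp add: Wone_def Wset_def permutes_id)

lemma Wmult_Wset: "a \<in> Wset N \<Longrightarrow> b \<in> Wset N \<Longrightarrow> Wmult a b \<in> Wset N"
  unfolding Wset_def Wmult_def
  by (auto simp: permutes_compose permutes_not_in)

lemma perm_in: "w permutes {1..N} \<Longrightarrow> 1 \<le> i \<Longrightarrow> i \<le> N \<Longrightarrow> 1 \<le> w i \<and> w i \<le> N"
  using permutes_in_image[of w "{1..N}" i] by auto

lemma perm_out: "w permutes {1..N} \<Longrightarrow> \<not> (1 \<le> i \<and> i \<le> N) \<Longrightarrow> w i = i"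
  using permutes_not_in[of w "{1..N}" i] by auto

lemma Winv_Wset: assumes "a \<in> Wset N" shows "Winv a \<in> Wset N"
proof -
  obtain w eta where a: "a = (w, eta)" by (cases a)
  have w: "w permutes {1..N}" and e: "\<forall>j. j \<notin> {1..N} \<longrightarrow> eta j = 0" using assms a by (auto simp: Wset_def)
  have "\<forall>j. j \<notin> {1..N} \<longrightarrow> inv w j = j" using perm_out[OF permutes_inv[OF w]] by auto
  then show ?thesis using e permutes_inv[OF w] unfolding a Winv_def Wset_def by auto
qed

lemma Wmult_Winv: "a \<in> Wset N \<Longrightarrow> Wmult a (Winv a) = Wone"
  unfolding Wset_def Winv_def Wmult_def Wone_def
  by (auto simp: permutes_inv_o permutes_inverses)

lemma Winv_Wmult: "a \<in> Wset N \<Longrightarrow> Wmult (Winv a) a = Wone"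
  unfolding Wset_def Winv_def Wmult_def Wone_def
  by (auto simp: permutes_inv_o permutes_inverses)

lemma Wprod_Cons: "Wprod (x # xs) = Wmult x (Wprod xs)"
  by (simp add: Wprod_def)

lemma Wprod_Nil: "Wprod [] = Wone"
  by (simp add: Wprod_def)

lemma Wprod_append: "Wprod (xs @ ys) = Wmult (Wprod xs) (Wprod ys)"
  by (induction xs) (auto simp: Wprod_Cons Wprod_Nil Wmult_assoc)

lemma Wof_Nil[simp]: "Wof N [] = Wone"
  by (simp add: Wof_def Wprod_Nil)

lemma Wof_Cons: "Wof N (m # u) = Wmult (sgen N m) (Wof N u)"
  by (simp add: Wof_def Wprod_Cons)

lemma Wof_append: "Wof N (u @ v) = Wmult (Wof N u) (Wof N v)"
  by (simp add: Wof_def Wprod_append)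

lemma Wact_root_mult: "Wact_root (Wmult a b) r = Wact_root a (Wact_root b r)"
  by (cases r) (simp add: Wact_root_def Wmult_def)

lemma Wact_root_Wone[simp]: "Wact_root Wone r = r"
  by (cases r) (simp add: Wact_root_def Wone_def)

lemma Wact_root_Rset: assumes "a \<in> Wset N" "r \<in> Rset N" shows "Wact_root a r \<in> Rset N"
proof -
  obtain w eta where a: "a = (w, eta)" by (cases a)
  obtain i j k where r: "r = (i, j, k)" by (cases r)
  have w: "w permutes {1..N}" using assms a by (simp add: Wset_def)
  show ?thesis using assms perm_in[OF w, of i] perm_in[OF w, of j] permutes_inj[OF w]
    unfolding a r Rset_def Wact_root_def by (auto simp: inj_eq)
qed

lemma Wact_root_inj: "a \<in> Wset N \<Longrightarrow> Wact_root a r = Wact_root a r' \<Longrightarrow> r = r'"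
  unfolding Wset_def Wact_root_def
  by (cases r; cases r') (auto simp: permutes_inj inj_eq)

lemma Wact_root_Winv: "a \<in> Wset N \<Longrightarrow> Wact_root a (Wact_root (Winv a) r) = r"
  by (metis Wact_root_Wone Wact_root_mult Wmult_Winv)

lemma Wact_root_Winv2: "a \<in> Wset N \<Longrightarrow> Wact_root (Winv a) (Wact_root a r) = r"
  by (metis Wact_root_Wone Wact_root_mult Winv_Wmult)

lemma Wact_root_surj: "a \<in> Wset N \<Longrightarrow> r \<in> Rset N \<Longrightarrow> \<exists>r'\<in>Rset N. Wact_root a r' = r"
  by (metis Wact_root_Rset Wact_root_Winv Winv_Wset)

lemma negr_negr[simp]: "negr (negr r) = r"
  by (cases r) (simp add: negr_def)

lemma Wact_root_negr: "Wact_root a (negr r) = negr (Wact_root a r)"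
  by (cases r) (simp add: negr_def Wact_root_def)

lemma negr_Rset: "r \<in> Rset N \<Longrightarrow> negr r \<in> Rset N"
  by (cases r) (auto simp: negr_def Rset_def)

lemma negr_Rpos: "r \<in> Rset N \<Longrightarrow> negr r \<in> Rpos N \<longleftrightarrow> r \<in> Rneg N"
  by (cases r) (auto simp: negr_def Rset_def Rpos_def Rneg_def)

lemma negr_Rneg: "r \<in> Rset N \<Longrightarrow> negr r \<in> Rneg N \<longleftrightarrow> r \<in> Rpos N"
  by (cases r) (auto simp: negr_def Rset_def Rpos_def Rneg_def)

lemma Rpos_Rset: "r \<in> Rpos N \<Longrightarrow> r \<in> Rset N"
  by (auto simp: Rpos_def)

lemma Rneg_Rset: "r \<in> Rneg N \<Longrightarrow> r \<in> Rset N"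
  by (auto simp: Rneg_def)

lemma Rpos_Rneg_disj: "r \<in> Rpos N \<Longrightarrow> r \<in> Rneg N \<Longrightarrow> False"
  by (auto simp: Rneg_def)

lemma Rset_cases: "r \<in> Rset N \<Longrightarrow> r \<in> Rpos N \<or> r \<in> Rneg N"
  by (auto simp: Rneg_def)

lemma s_root_eq: "s_root (p, q, k) = (transpose p q, \<lambda>l. k * (ind p l - ind q l))"
  by (auto simp: s_root_def Wmult_def Wt_def sbar_def ind_def transpose_def fun_eq_iff)

lemma s_root_Wset: "r \<in> Rset N \<Longrightarrow> s_root r \<in> Wset N"
  by (cases r) (auto simp: s_root_eq Wset_def Rset_def ind_def permutes_swap_id)

lemma s_root_conj:
  assumes "a \<in> Wset N"
  shows "Wmult a (s_root r) = Wmult (s_root (Wact_root a r)) a"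
proof -
  obtain i j k where r: "r = (i, j, k)" by (cases r)
  obtain w eta where a: "a = (w, eta)" by (cases a)
  have inj: "inj w" using assms a by (auto simp: Wset_def permutes_inj)
  have f: "w \<circ> transpose i j = transpose (w i) (w j) \<circ> w"
    using inj by (auto simp: fun_eq_iff transpose_def inj_eq)
  show ?thesis
    using inj unfolding r a
    by (auto simp: s_root_eq Wact_root_def Wmult_def f fun_eq_iff transpose_def ind_def inj_eq algebra_simps)
qed

lemma s_root_negr: "s_root (negr r) = s_root r"
  by (cases r) (auto simp: negr_def s_root_eq transpose_commute fun_eq_iff algebra_simps)

lemma s_root_invol: "Wmult (s_root r) (s_root r) = Wone"
  by (cases r) (auto simp: s_root_eq Wmult_def Wone_def fun_eq_iff transpose_def ind_def)

lemma s_root_act_invol: "Wact_root (s_root r) (Wact_root (s_root r) q) = q"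
  by (metis Wact_root_Wone Wact_root_mult s_root_invol)


lemma alpha_Rset: "2 \<le> N \<Longrightarrow> m < N \<Longrightarrow> alpha_simple N m \<in> Rset N"
  by (auto simp: alpha_simple_def Rset_def)

lemma alpha_Rpos: "2 \<le> N \<Longrightarrow> m < N \<Longrightarrow> alpha_simple N m \<in> Rpos N"
  by (auto simp: alpha_simple_def Rpos_def Rset_def)

lemma sgen_Wset: "2 \<le> N \<Longrightarrow> m < N \<Longrightarrow> sgen N m \<in> Wset N"
  by (simp add: sgen_def s_root_Wset alpha_Rset)

lemma sgen_act: "Wact_root (sgen N m) (a, b, k) = (if m = 0 then
     (transpose N 1 a, transpose N 1 b, k - (ind N a - ind 1 a - ind N b + ind 1 b))
   else (transpose m (Suc m) a, transpose m (Suc m) b, k))"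
  by (auto simp: sgen_def alpha_simple_def s_root_eq Wact_root_def algebra_simps)

lemma sgen_invol: "Wmult (sgen N m) (sgen N m) = Wone"
  by (simp add: sgen_def s_root_invol)

lemma sgen_act_invol: "Wact_root (sgen N m) (Wact_root (sgen N m) r) = r"
  by (simp add: sgen_def s_root_act_invol)

lemma simple_refl:
  assumes N: "2 \<le> N" and m: "m < N" and r: "r \<in> Rset N"
  shows "Wact_root (sgen N m) r \<in> Rpos N \<longleftrightarrow>
     (r \<in> Rpos N \<and> r \<noteq> alpha_simple N m) \<or> r = negr (alpha_simple N m)"
proof -
  obtain a b k where rr: "r = (a, b, k)" by (cases r)
  have ab: "1 \<le> a" "a \<le> N" "1 \<le> b" "b \<le> N" "a \<noteq> b" using r rr by (auto simp: Rset_def)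
  show ?thesis
  proof (cases "m = 0")
    case True
    then show ?thesis using ab N unfolding rr sgen_act
      by (auto simp: Rpos_def Rset_def transpose_def ind_def alpha_simple_def negr_def split: if_splits)
  next
    case False
    then show ?thesis using ab N m unfolding rr sgen_act
      by (auto simp: Rpos_def Rset_def transpose_def ind_def alpha_simple_def negr_def split: if_splits)
  qed
qed

lemma sgen_alpha: "2 \<le> N \<Longrightarrow> m < N \<Longrightarrow> Wact_root (sgen N m) (alpha_simple N m) = negr (alpha_simple N m)"
  by (auto simp: sgen_act alpha_simple_def negr_def transpose_def ind_def)


definition invset :: "nat \<Rightarrow> Welt \<Rightarrow> root set" where
  "invset N a = {r \<in> Rpos N. Wact_root a r \<in> Rneg N}"

lemma lengthW_invset: "lengthW N a = card (invset N a)"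
  by (simp add: lengthW_def invset_def)

lemma invset_finite:
  assumes "a \<in> Wset N"
  shows "finite (invset N a)"
proof -
  obtain w eta where a: "a = (w, eta)" by (cases a)
  define B where "B = (\<Sum>l\<in>{1..N}. \<bar>eta l\<bar>)"
  have le: "\<bar>eta i\<bar> \<le> B" if "i \<in> {1..N}" for i
    unfolding B_def using that by (intro member_le_sum) auto
  have "invset N a \<subseteq> {1..N} \<times> {1..N} \<times> {-(2*B)..2*B}"
  proof
    fix r assume r: "r \<in> invset N a"
    obtain i j k where rr: "r = (i, j, k)" by (cases r)
    have ij: "i \<in> {1..N}" "j \<in> {1..N}" using r rr by (auto simp: invset_def Rpos_def Rset_def)
    have "0 \<le> k" "k - (eta i - eta j) \<le> 0"
      using r rr a by (auto simp: invset_def Rpos_def Rneg_def Rset_def Wact_root_def)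
    then show "r \<in> {1..N} \<times> {1..N} \<times> {-(2*B)..2*B}"
      using le[OF ij(1)] le[OF ij(2)] ij rr by auto
  qed
  then show ?thesis by (rule finite_subset) auto
qed

lemma lengthW_Wone[simp]: "lengthW N Wone = 0"
proof -
  have "invset N Wone = {}" by (auto simp: invset_def Rneg_def)
  then show ?thesis by (simp add: lengthW_invset)
qed

lemma length_left:
  assumes N: "2 \<le> N" and m: "m < N" and a: "a \<in> Wset N"
  shows "alpha_simple N m \<in> Wact_root a ` Rpos N \<Longrightarrow> lengthW N (Wmult (sgen N m) a) = lengthW N a + 1"
    and "alpha_simple N m \<in> Wact_root a ` Rneg N \<Longrightarrow> lengthW N (Wmult (sgen N m) a) + 1 = lengthW N a"
proof -
  let ?al = "alpha_simple N m"
  let ?s = "sgen N m"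
  have key: "Wact_root ?s (Wact_root a r) \<in> Rneg N \<longleftrightarrow>
     (Wact_root a r \<in> Rneg N \<or> Wact_root a r = ?al) \<and> Wact_root a r \<noteq> negr ?al" if r: "r \<in> Rpos N" for r
  proof -
    have ar: "Wact_root a r \<in> Rset N" using Wact_root_Rset[OF a Rpos_Rset[OF r]] .
    have sar: "Wact_root ?s (Wact_root a r) \<in> Rset N" using Wact_root_Rset[OF sgen_Wset[OF N m] ar] .
    have "Wact_root ?s (Wact_root a r) \<in> Rneg N \<longleftrightarrow> \<not> Wact_root ?s (Wact_root a r) \<in> Rpos N"
      using sar Rset_cases Rpos_Rneg_disj by blast
    also have "\<dots> \<longleftrightarrow> (Wact_root a r \<in> Rneg N \<or> Wact_root a r = ?al) \<and> Wact_root a r \<noteq> negr ?al"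
      using simple_refl[OF N m ar] ar Rset_cases Rpos_Rneg_disj by blast
    finally show ?thesis .
  qed
  have fin: "finite (invset N a)" by (rule invset_finite[OF a])
  {
    assume "?al \<in> Wact_root a ` Rpos N"
    then obtain r0 where r0: "r0 \<in> Rpos N" "Wact_root a r0 = ?al" by auto
    have "invset N (Wmult ?s a) = insert r0 (invset N a)"
    proof -
      have "Wact_root a r \<noteq> negr ?al" if "r \<in> Rpos N" for r
      proof
        assume "Wact_root a r = negr ?al"
        then have "Wact_root a r = Wact_root a (negr r0)" using r0 by (simp add: Wact_root_negr)
        then have "r = negr r0" using Wact_root_inj[OF a] by blast
        then show False using that r0 negr_Rpos Rpos_Rset Rpos_Rneg_disj by metis
      qed
      moreover have "Wact_root a r = ?al \<longleftrightarrow> r = r0" for r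
        using r0 Wact_root_inj[OF a] by metis
      ultimately have "r \<in> invset N (Wmult ?s a) \<longleftrightarrow> r \<in> insert r0 (invset N a)" for r
        using key[of r] r0 by (auto simp: invset_def Wact_root_mult)
      then show ?thesis by blast
    qed
    moreover have "r0 \<notin> invset N a"
      using r0 alpha_Rpos[OF N m] Rpos_Rneg_disj[of "alpha_simple N m" N] unfolding invset_def by auto
    ultimately show "lengthW N (Wmult (sgen N m) a) = lengthW N a + 1"
      using fin by (simp add: lengthW_invset)
  }
  {
    assume "?al \<in> Wact_root a ` Rneg N"
    then obtain r0 where r0: "r0 \<in> Rneg N" "Wact_root a r0 = ?al" by auto
    have nr0: "negr r0 \<in> Rpos N" using r0 negr_Rpos Rneg_Rset by blast
    have an: "Wact_root a (negr r0) = negr ?al" using r0 by (simp add: Wact_root_negr)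
    have "invset N (Wmult ?s a) = invset N a - {negr r0}"
    proof -
      have "Wact_root a r \<noteq> ?al" if "r \<in> Rpos N" for r
        using that r0 Wact_root_inj[OF a] Rpos_Rneg_disj by metis
      moreover have "Wact_root a r = negr ?al \<longleftrightarrow> r = negr r0" for r
        using an Wact_root_inj[OF a] by metis
      ultimately have "r \<in> invset N (Wmult ?s a) \<longleftrightarrow> r \<in> invset N a - {negr r0}" for r
        using key[of r] by (auto simp: invset_def Wact_root_mult)
      then show ?thesis by blast
    qed
    moreover have "negr r0 \<in> invset N a"
      using nr0 an negr_Rneg alpha_Rpos[OF N m] alpha_Rset[OF N m] by (auto simp: invset_def)
    ultimately show "lengthW N (Wmult (sgen N m) a) + 1 = lengthW N a"
      using fin by (simp add: lengthW_invset card_Diff_singleton) (metis card_gt_0_iff empty_iff Suc_pred)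
  }
qed

lemma length_left_cases:
  assumes N: "2 \<le> N" and m: "m < N" and a: "a \<in> Wset N"
  shows "alpha_simple N m \<in> Wact_root a ` Rpos N \<or> alpha_simple N m \<in> Wact_root a ` Rneg N"
proof -
  obtain r where "r \<in> Rset N" "Wact_root a r = alpha_simple N m"
    using Wact_root_surj[OF a alpha_Rset[OF N m]] by auto
  then show ?thesis using Rset_cases by (metis image_eqI)
qed

lemma length_left_le:
  assumes N: "2 \<le> N" and m: "m < N" and a: "a \<in> Wset N"
  shows "lengthW N (Wmult (sgen N m) a) \<le> lengthW N a + 1"
    and "lengthW N a \<le> lengthW N (Wmult (sgen N m) a) + 1"
  using length_left[OF N m a] length_left_cases[OF N m a] by force+

lemma Wof_Wset: "2 \<le> N \<Longrightarrow> set u \<subseteq> {..<N} \<Longrightarrow> Wof N u \<in> Wset N"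
  by (induction u) (auto simp: Wof_Cons Wmult_Wset sgen_Wset)

lemma word_bound: "2 \<le> N \<Longrightarrow> set u \<subseteq> {..<N} \<Longrightarrow> lengthW N (Wof N u) \<le> length u"
proof (induction u)
  case Nil then show ?case by simp
next
  case (Cons m u)
  then show ?case
    using length_left_le(1)[of N m "Wof N u"] Wof_Wset[of N u] by (auto simp: Wof_Cons)
qed


definition cyc :: "nat \<Rightarrow> nat \<Rightarrow> nat" where
  "cyc N x = (if 1 \<le> x \<and> x < N then Suc x else if x = N then 1 else x)"

lemma sgen_pos: "1 \<le> m \<Longrightarrow> sgen N m = (transpose m (Suc m), \<lambda>_. 0)"
  by (simp add: sgen_def alpha_simple_def s_root_eq)

lemma Wprod_cyc:
  assumes "1 \<le> a" "a \<le> N"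
  shows "Wprod (map (sgen N) [a..<N]) = (\<lambda>x. if a \<le> x \<and> x < N then Suc x else if x = N then a else x, \<lambda>_. 0)"
  using assms
proof (induction "N - a" arbitrary: a)
  case 0
  then have "a = N" by simp
  then show ?case by (auto simp: Wprod_Nil Wone_def fun_eq_iff)
next
  case (Suc d)
  then have aN: "a < N" by simp
  have IH: "Wprod (map (sgen N) [Suc a..<N]) = (\<lambda>x. if Suc a \<le> x \<and> x < N then Suc x else if x = N then Suc a else x, \<lambda>_. 0)"
    using Suc by auto
  have cons: "[a..<N] = a # [Suc a..<N]" using aN by (simp add: upt_conv_Cons)
  have f: "transpose a (Suc a) \<circ> (\<lambda>x. if Suc a \<le> x \<and> x < N then Suc x else if x = N then Suc a else x) =
     (\<lambda>x. if a \<le> x \<and> x < N then Suc x else if x = N then a else x)"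
  proof (rule ext)
    fix x
    show "(transpose a (Suc a) \<circ> (\<lambda>x. if Suc a \<le> x \<and> x < N then Suc x else if x = N then Suc a else x)) x =
          (if a \<le> x \<and> x < N then Suc x else if x = N then a else x)"
      using aN Suc(3) by (cases "x = a"; cases "x = N"; cases "x < a"; simp add: transpose_def)
  qed
  show ?case using f by (simp add: cons Wprod_Cons IH sgen_pos[OF Suc(3)] Wmult_def)
qed

lemma piW_eq: "2 \<le> N \<Longrightarrow> piW N = (cyc N, ind N)"
  using Wprod_cyc[of 1 N]
  by (auto simp: piW_def Wmult_def Wt_def cyc_def ind_def fun_eq_iff)

lemma Wt_Wset: "(\<forall>j. j \<notin> {1..N} \<longrightarrow> eta j = 0) \<Longrightarrow> Wt eta \<in> Wset N"
  by (simp add: Wt_def Wset_def permutes_id)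

lemma piW_Wset: "2 \<le> N \<Longrightarrow> piW N \<in> Wset N"
proof -
  assume N: "2 \<le> N"
  have "set [1..<N] \<subseteq> {..<N}" by auto
  then have "Wof N [1..<N] \<in> Wset N" using Wof_Wset N by blast
  moreover have "Wt (ind 1) \<in> Wset N" using N by (intro Wt_Wset) (auto simp: ind_def)
  ultimately show ?thesis unfolding piW_def Wof_def by (metis Wmult_Wset)
qed

lemma piW_act: "2 \<le> N \<Longrightarrow> Wact_root (piW N) (a, b, k) = (cyc N a, cyc N b, k - (ind N a - ind N b))"
  by (simp add: piW_eq Wact_root_def)

definition good :: "nat \<Rightarrow> Welt \<Rightarrow> bool" where
  "good N p \<longleftrightarrow> p \<in> Wset N \<and> (\<forall>r\<in>Rset N. Wact_root p r \<in> Rpos N \<longleftrightarrow> r \<in> Rpos N) \<and>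
     (\<forall>m<N. \<exists>m'<N. Wact_root p (alpha_simple N m) = alpha_simple N m') \<and>
     (\<forall>m<N. \<exists>m'<N. Wact_root p (alpha_simple N m') = alpha_simple N m)"

lemma good_Wone: "good N Wone"
  by (auto simp: good_def)

lemma good_mult: "good N p \<Longrightarrow> good N q \<Longrightarrow> good N (Wmult p q)"
  unfolding good_def
  apply (intro conjI)
     apply (simp add: Wmult_Wset)
    apply (metis Wact_root_Rset Wact_root_mult)
   apply (metis Wact_root_mult)
  apply (metis Wact_root_mult)
  done

lemma good_Winv: assumes "good N p" shows "good N (Winv p)"
proof -
  have p: "p \<in> Wset N" using assms by (simp add: good_def)
  have pi: "Winv p \<in> Wset N" using Winv_Wset[OF p] .
  have a: "Wact_root (Winv p) r \<in> Rpos N \<longleftrightarrow> r \<in> Rpos N" if "r \<in> Rset N" for r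
    using assms that Wact_root_Rset[OF pi that] Wact_root_Winv[OF p, of r] unfolding good_def by metis
  have b: "\<exists>m'<N. Wact_root (Winv p) (alpha_simple N m) = alpha_simple N m'" if "m < N" for m
    using assms that Wact_root_Winv2[OF p] unfolding good_def by metis
  have c: "\<exists>m'<N. Wact_root (Winv p) (alpha_simple N m') = alpha_simple N m" if "m < N" for m
    using assms that Wact_root_Winv2[OF p] unfolding good_def by metis
  show ?thesis using pi a b c by (simp add: good_def)
qed

lemma good_piW: assumes N: "2 \<le> N" shows "good N (piW N)"
proof -
  have pos: "Wact_root (piW N) r \<in> Rpos N \<longleftrightarrow> r \<in> Rpos N" if "r \<in> Rset N" for r
  proof -
    obtain a b k where rr: "r = (a, b, k)" by (cases r)
    show ?thesis using that N unfolding rr piW_act[OF N]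
      by (auto simp: Rset_def Rpos_def cyc_def ind_def split: if_splits)
  qed
  have fw: "Wact_root (piW N) (alpha_simple N m) = alpha_simple N (if Suc m = N then 0 else Suc m)" if "m < N" for m
    using that N by (auto simp: piW_act alpha_simple_def cyc_def ind_def)
  have bw: "Wact_root (piW N) (alpha_simple N (if m = 0 then N - 1 else m - 1)) = alpha_simple N m" if "m < N" for m
    using that N by (auto simp: piW_act alpha_simple_def cyc_def ind_def)
  show ?thesis unfolding good_def
    apply (intro conjI piW_Wset N)
    using pos apply blast
    subgoal
    proof (intro allI impI)
      fix m assume m: "m < N"
      show "\<exists>m'<N. Wact_root (piW N) (alpha_simple N m) = alpha_simple N m'"
        using fw[OF m] m N by (intro exI[of _ "if Suc m = N then 0 else Suc m"]) auto
    qed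
    subgoal
    proof (intro allI impI)
      fix m assume m: "m < N"
      show "\<exists>m'<N. Wact_root (piW N) (alpha_simple N m') = alpha_simple N m"
        using bw[OF m] m N by (intro exI[of _ "if m = 0 then N - 1 else m - 1"]) auto
    qed
    done
qed

lemma good_Wpow: "2 \<le> N \<Longrightarrow> good N (Wpow (piW N) k)"
proof -
  assume N: "2 \<le> N"
  have "good N ((Wmult (piW N) ^^ n) Wone)" for n
    by (induction n) (auto simp: good_Wone good_mult good_piW N)
  moreover have "good N ((Wmult (Winv (piW N)) ^^ n) Wone)" for n
    by (induction n) (auto simp: good_Wone good_mult good_Winv good_piW N)
  ultimately show ?thesis by (simp add: Wpow_def)
qed

lemma good_length: assumes "good N p" "a \<in> Wset N" shows "lengthW N (Wmult p a) = lengthW N a"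
proof -
  have "invset N (Wmult p a) = invset N a"
  proof -
    have "Wact_root p (Wact_root a r) \<in> Rneg N \<longleftrightarrow> Wact_root a r \<in> Rneg N" if "r \<in> Rpos N" for r
    proof -
      have ar: "Wact_root a r \<in> Rset N" using Wact_root_Rset[OF assms(2) Rpos_Rset[OF that]] .
      have p: "p \<in> Wset N" using assms by (simp add: good_def)
      have "Wact_root p (Wact_root a r) \<in> Rset N" using Wact_root_Rset[OF p ar] .
      then show ?thesis using ar assms(1) unfolding good_def Rneg_def by auto
    qed
    then show ?thesis by (auto simp: invset_def Wact_root_mult)
  qed
  then show ?thesis by (simp add: lengthW_invset)
qed

definition tsum :: "nat \<Rightarrow> Welt \<Rightarrow> int" where
  "tsum N a = (\<Sum>l\<in>{1..N}. snd a l)"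

lemma tsum_mult: "b \<in> Wset N \<Longrightarrow> tsum N (Wmult a b) = tsum N a + tsum N b"
proof -
  assume b: "b \<in> Wset N"
  then have p: "fst b permutes {1..N}" by (auto simp: Wset_def)
  have "(\<Sum>l\<in>{1..N}. snd a (fst b l)) = (\<Sum>l\<in>{1..N}. snd a l)"
    using sum.permute[OF p, of "snd a"] by (simp add: o_def)
  then show ?thesis by (simp add: tsum_def Wmult_def sum.distrib)
qed

lemma sum_ind: "p \<in> {1..N} \<Longrightarrow> (\<Sum>l\<in>{1..N}. ind p l) = 1"
  by (simp add: ind_def)

lemma tsum_sgen: "2 \<le> N \<Longrightarrow> m < N \<Longrightarrow> tsum N (sgen N m) = 0"
proof -
  assume N: "2 \<le> N" and m: "m < N"
  obtain p q k where al: "alpha_simple N m = (p, q, k)" by (cases "alpha_simple N m")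
  have pq: "p \<in> {1..N}" "q \<in> {1..N}" using alpha_Rset[OF N m] al by (auto simp: Rset_def)
  have "tsum N (sgen N m) = (\<Sum>l\<in>{1..N}. k * (ind p l - ind q l))"
    by (simp add: tsum_def sgen_def al s_root_eq)
  also have "\<dots> = k * ((\<Sum>l\<in>{1..N}. ind p l) - (\<Sum>l\<in>{1..N}. ind q l))"
    by (simp add: sum_distrib_left sum_subtractf right_diff_distrib)
  also have "\<dots> = 0" using sum_ind[OF pq(1)] sum_ind[OF pq(2)] by simp
  finally show ?thesis .
qed

lemma tsum_Wone[simp]: "tsum N Wone = 0"
  by (simp add: tsum_def Wone_def)

lemma tsum_Wof: "2 \<le> N \<Longrightarrow> set u \<subseteq> {..<N} \<Longrightarrow> tsum N (Wof N u) = 0"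
  by (induction u) (auto simp: Wof_Cons tsum_mult Wof_Wset tsum_sgen)

lemma tsum_piW: "2 \<le> N \<Longrightarrow> tsum N (piW N) = 1"
  using sum_ind[of N N] by (simp add: tsum_def piW_eq)

lemma tsum_Wpow: assumes N: "2 \<le> N" shows "tsum N (Wpow (piW N) k) = k"
proof -
  have P: "piW N \<in> Wset N" by (rule piW_Wset[OF N])
  have PI: "Winv (piW N) \<in> Wset N" by (rule Winv_Wset[OF P])
  have ti: "tsum N (Winv (piW N)) = -1"
    using tsum_mult[OF PI, of "piW N"] Wmult_Winv[OF P] tsum_piW[OF N] by simp
  have w1: "(Wmult (piW N) ^^ n) Wone \<in> Wset N" for n
    by (induction n) (auto simp: Wmult_Wset P)
  have w2: "(Wmult (Winv (piW N)) ^^ n) Wone \<in> Wset N" for n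
    by (induction n) (auto simp: Wmult_Wset PI)
  have "tsum N ((Wmult (piW N) ^^ n) Wone) = int n" for n
    by (induction n) (auto simp: tsum_mult w1 tsum_piW N)
  moreover have "tsum N ((Wmult (Winv (piW N)) ^^ n) Wone) = - int n" for n
    by (induction n) (auto simp: tsum_mult w2 ti)
  ultimately show ?thesis by (simp add: Wpow_def)
qed

lemma Wpow_Wset: "2 \<le> N \<Longrightarrow> Wpow (piW N) k \<in> Wset N"
  using good_Wpow by (simp add: good_def)

lemma left_cancel: "p \<in> Wset N \<Longrightarrow> Wmult p x = Wmult p y \<Longrightarrow> x = y"
  by (metis Wmult_Wone_left Wmult_assoc Winv_Wmult)

lemma expr_unique:
  assumes N: "2 \<le> N" and u: "set u \<subseteq> {..<N}" and u': "set u' \<subseteq> {..<N}"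
    and eq: "Wmult (Wpow (piW N) k) (Wof N u) = Wmult (Wpow (piW N) k') (Wof N u')"
  shows "k = k' \<and> Wof N u = Wof N u'"
proof -
  have "tsum N (Wmult (Wpow (piW N) k) (Wof N u)) = k"
    using tsum_mult[OF Wof_Wset[OF N u]] tsum_Wof[OF N u] tsum_Wpow[OF N] by simp
  moreover have "tsum N (Wmult (Wpow (piW N) k') (Wof N u')) = k'"
    using tsum_mult[OF Wof_Wset[OF N u']] tsum_Wof[OF N u'] tsum_Wpow[OF N] by simp
  ultimately have "k = k'" using eq by simp
  then show ?thesis using eq left_cancel[OF Wpow_Wset[OF N]] by blast
qed


abbreviation al :: "nat \<Rightarrow> nat \<Rightarrow> root" where "al N m \<equiv> alpha_simple N m"

definition adj :: "nat \<Rightarrow> nat \<Rightarrow> nat \<Rightarrow> bool" where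
  "adj N s t \<longleftrightarrow> (1 \<le> s \<and> 1 \<le> t \<and> (t = Suc s \<or> s = Suc t)) \<or> (s = 0 \<and> (t = 1 \<or> t = N - 1))
     \<or> (t = 0 \<and> (s = 1 \<or> s = N - 1))"

lemma adj_sym: "adj N s t \<longleftrightarrow> adj N t s"
  by (auto simp: adj_def)

lemma nonadj_fix:
  assumes N: "2 \<le> N" and s: "s < N" and t: "t < N" and st: "s \<noteq> t" and na: "\<not> adj N s t"
  shows "Wact_root (sgen N s) (al N t) = al N t"
proof (cases "s = 0")
  case True
  then have "t \<noteq> 0" "t \<noteq> 1" "Suc t \<noteq> N" "t \<noteq> N" using na st t by (auto simp: adj_def)
  then show ?thesis using True by (simp add: sgen_act alpha_simple_def transpose_def ind_def)
next
  case False
  show ?thesis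
  proof (cases "t = 0")
    case True
    then have "s \<noteq> 1" "Suc s \<noteq> N" "s \<noteq> N" "Suc s \<noteq> 1" using na st s False by (auto simp: adj_def)
    then show ?thesis using True False by (simp add: sgen_act alpha_simple_def transpose_def)
  next
    case False2: False
    then have "t \<noteq> Suc s" "s \<noteq> Suc t" "s \<noteq> t" using na st False by (auto simp: adj_def)
    then show ?thesis using False2 False by (simp add: sgen_act alpha_simple_def transpose_def)
  qed
qed

definition sumrel :: "root \<Rightarrow> root \<Rightarrow> root \<Rightarrow> bool" where
  "sumrel a b c \<longleftrightarrow> (\<exists>p q r k1 k2. p \<noteq> r \<and>
     ((a = (p, q, k1) \<and> b = (q, r, k2)) \<or> (b = (p, q, k1) \<and> a = (q, r, k2))) \<and> c = (p, r, k1 + k2))"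

definition adjP :: "nat \<Rightarrow> nat \<Rightarrow> nat \<Rightarrow> bool" where
  "adjP N s t \<longleftrightarrow> Wact_root (sgen N t) (al N s) = Wact_root (sgen N s) (al N t) \<and>
     sumrel (al N s) (al N t) (Wact_root (sgen N s) (al N t)) \<and>
     Wact_root (sgen N s) (al N t) \<noteq> al N t \<and> Wact_root (sgen N t) (al N s) \<noteq> al N s"

lemma adjP_sym: "adjP N s t \<Longrightarrow> adjP N t s"
  unfolding adjP_def sumrel_def by metis

lemma adjP_a: "3 \<le> N \<Longrightarrow> 1 \<le> s \<Longrightarrow> Suc s < N \<Longrightarrow> adjP N s (Suc s)"
  unfolding adjP_def sumrel_def
  by (intro conjI exI[of _ s] exI[of _ "Suc s"] exI[of _ "Suc (Suc s)"] exI[of _ 0] exI[of _ 0])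
     (simp_all add: sgen_act alpha_simple_def transpose_def)

lemma adjP_c: "3 \<le> N \<Longrightarrow> adjP N 0 1"
  unfolding adjP_def sumrel_def
  by (intro conjI exI[of _ N] exI[of _ 1] exI[of _ 2] exI[of _ 1] exI[of _ 0])
     (simp_all add: sgen_act alpha_simple_def transpose_def ind_def)

lemma adjP_d0: "adjP (Suc (Suc (Suc n))) 0 (Suc (Suc n))"
  unfolding adjP_def sumrel_def
  by (intro conjI exI[of _ "Suc (Suc n)"] exI[of _ "Suc (Suc (Suc n))"] exI[of _ 1] exI[of _ 0] exI[of _ 1])
     (simp_all add: sgen_act alpha_simple_def transpose_def ind_def)

lemma adjP_d: "3 \<le> N \<Longrightarrow> adjP N 0 (N - 1)"
  using adjP_d0[of "N - 3"] by (simp add: numeral_3_eq_3 Suc_diff_Suc)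

lemma adj_adjP:
  assumes N: "3 \<le> N" and s: "s < N" and t: "t < N" and st: "s \<noteq> t" and a: "adj N s t"
  shows "adjP N s t"
  using a unfolding adj_def
proof (elim disjE conjE)
  assume "1 \<le> s" "1 \<le> t" "t = Suc s" then show ?thesis using adjP_a N t by simp
next
  assume "1 \<le> s" "1 \<le> t" "s = Suc t" then show ?thesis using adjP_a[of N t] adjP_sym N s by simp
next
  assume "s = 0" "t = 1" then show ?thesis using adjP_c N by simp
next
  assume "s = 0" "t = N - 1" then show ?thesis using adjP_d N by simp
next
  assume "t = 0" "s = 1" then show ?thesis using adjP_c N adjP_sym by simp
next
  assume "t = 0" "s = N - 1" then show ?thesis using adjP_d N adjP_sym by simp
qed

lemma adj_comm:
  assumes N: "2 \<le> N" and s: "s < N" and t: "t < N" and st: "s \<noteq> t"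
    and eq: "Wact_root (sgen N s) (al N t) = al N t"
  shows "Wact_root (sgen N t) (al N s) = al N s"
proof (cases "N = 2")
  case True
  then have "(s = 0 \<and> t = 1) \<or> (s = 1 \<and> t = 0)" using s t st by auto
  then show ?thesis using eq True
    by (elim disjE conjE; simp add: sgen_act alpha_simple_def transpose_def ind_def)
next
  case False
  then have N3: "3 \<le> N" using N by simp
  show ?thesis
  proof (cases "adj N s t")
    case True
    then show ?thesis using adj_adjP[OF N3 s t st] eq by (simp add: adjP_def)
  next
    case False
    then show ?thesis using nonadj_fix[OF N t s] st s adj_sym by metis
  qed
qed

lemma nonfix_adjP:
  assumes N: "3 \<le> N" and s: "s < N" and t: "t < N" and st: "s \<noteq> t"
    and ne: "Wact_root (sgen N s) (al N t) \<noteq> al N t"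
  shows "adjP N s t"
  using nonadj_fix[OF _ s t st] adj_adjP[OF N s t st] ne N by fastforce


lemma img_iff: assumes x: "x \<in> Wset N" shows "\<gamma> \<in> Wact_root x ` S \<longleftrightarrow> Wact_root (Winv x) \<gamma> \<in> S"
proof
  assume "\<gamma> \<in> Wact_root x ` S"
  then obtain r where "r \<in> S" "\<gamma> = Wact_root x r" by auto
  then show "Wact_root (Winv x) \<gamma> \<in> S" using Wact_root_Winv2[OF x] by simp
next
  assume "Wact_root (Winv x) \<gamma> \<in> S"
  moreover have "\<gamma> = Wact_root x (Wact_root (Winv x) \<gamma>)" using Wact_root_Winv[OF x] by simp
  ultimately show "\<gamma> \<in> Wact_root x ` S" by blast
qed

lemma Rset_iff: "(A, B, K) \<in> Rset N \<longleftrightarrow> 1 \<le> A \<and> A \<le> N \<and> 1 \<le> B \<and> B \<le> N \<and> A \<noteq> B"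
  by (simp add: Rset_def)

lemma Rpos_iff: "(A, B, K) \<in> Rpos N \<longleftrightarrow> (A, B, K) \<in> Rset N \<and> ((A < B \<and> 0 \<le> K) \<or> (B < A \<and> 0 < K))"
  by (simp add: Rpos_def)

lemma Rneg_iff: "(A, B, K) \<in> Rneg N \<longleftrightarrow> (A, B, K) \<in> Rset N \<and> ((A < B \<and> K < 0) \<or> (B < A \<and> K \<le> 0))"
  by (auto simp add: Rneg_def Rpos_def Rset_def)

lemma img_sgen: "\<gamma> \<in> Wact_root (Wmult (sgen N m) b) ` S \<longleftrightarrow> Wact_root (sgen N m) \<gamma> \<in> Wact_root b ` S"
proof
  assume "\<gamma> \<in> Wact_root (Wmult (sgen N m) b) ` S"
  then obtain r where "r \<in> S" "\<gamma> = Wact_root (sgen N m) (Wact_root b r)" by (auto simp: Wact_root_mult)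
  then show "Wact_root (sgen N m) \<gamma> \<in> Wact_root b ` S" by (simp add: sgen_act_invol)
next
  assume "Wact_root (sgen N m) \<gamma> \<in> Wact_root b ` S"
  then obtain r where "r \<in> S" "Wact_root (sgen N m) \<gamma> = Wact_root b r" by auto
  then have "\<gamma> = Wact_root (Wmult (sgen N m) b) r" by (metis Wact_root_mult sgen_act_invol)
  then show "\<gamma> \<in> Wact_root (Wmult (sgen N m) b) ` S" using \<open>r \<in> S\<close> by blast
qed

lemma neg_sum: "(A, B, K1) \<in> Rneg N \<Longrightarrow> (B, C, K2) \<in> Rneg N \<Longrightarrow> (A, C, K) \<in> Rset N \<Longrightarrow> K = K1 + K2
   \<Longrightarrow> (A, C, K) \<in> Rneg N"
  unfolding Rneg_iff Rset_iff by linarith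

lemma pos_sum: "(A, B, K1) \<in> Rpos N \<Longrightarrow> (B, C, K2) \<in> Rpos N \<Longrightarrow> (A, C, K) \<in> Rset N \<Longrightarrow> K = K1 + K2
   \<Longrightarrow> (A, C, K) \<in> Rpos N"
  unfolding Rpos_iff Rset_iff by linarith

lemma act_sum: "Wact_root y (p, q, k1) = (A, B, K1) \<Longrightarrow> Wact_root y (q, r, k2) = (B', C, K2) \<Longrightarrow>
   B' = B \<and> Wact_root y (p, r, k1 + k2) = (A, C, K1 + K2)"
  by (cases y) (auto simp: Wact_root_def)

lemma sum_neg_raw:
  assumes y: "y \<in> Wset N" and a: "Wact_root y (p, q, k1) \<in> Rneg N" and b: "Wact_root y (q, r, k2) \<in> Rneg N"
    and c: "(p, r, k1 + k2) \<in> Rset N"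
  shows "Wact_root y (p, r, k1 + k2) \<in> Rneg N"
proof -
  obtain A B K1 where A: "Wact_root y (p, q, k1) = (A, B, K1)" by (cases "Wact_root y (p, q, k1)") auto
  obtain B' C K2 where B: "Wact_root y (q, r, k2) = (B', C, K2)" by (cases "Wact_root y (q, r, k2)") auto
  from act_sum[OF A B] have e: "B' = B" "Wact_root y (p, r, k1 + k2) = (A, C, K1 + K2)" by auto
  have "(A, C, K1 + K2) \<in> Rset N" using Wact_root_Rset[OF y c] e by simp
  then show ?thesis using neg_sum[of A B K1 N C K2] a b A B e by simp
qed

lemma sum_neg_img:
  assumes x: "x \<in> Wset N" and s: "sumrel a b c" and c: "c \<in> Rset N"
    and a: "a \<in> Wact_root x ` Rneg N" and b: "b \<in> Wact_root x ` Rneg N"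
  shows "c \<in> Wact_root x ` Rneg N"
proof -
  have y: "Winv x \<in> Wset N" by (rule Winv_Wset[OF x])
  have a': "Wact_root (Winv x) a \<in> Rneg N" and b': "Wact_root (Winv x) b \<in> Rneg N"
    using a b img_iff[OF x] by auto
  from s obtain p q r k1 k2 where
    pqr: "(a = (p, q, k1) \<and> b = (q, r, k2)) \<or> (b = (p, q, k1) \<and> a = (q, r, k2))" and cc: "c = (p, r, k1 + k2)"
    unfolding sumrel_def by blast
  have "Wact_root (Winv x) c \<in> Rneg N"
    using pqr sum_neg_raw[OF y, of p q k1 r k2] a' b' c cc by auto
  then show ?thesis using img_iff[OF x] by auto
qed

lemma N2_contra:
  assumes x: "x \<in> Wset 2" and a: "al 2 0 \<in> Wact_root x ` Rneg 2" and b: "al 2 1 \<in> Wact_root x ` Rneg 2"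
  shows False
proof -
  have y: "Winv x \<in> Wset 2" by (rule Winv_Wset[OF x])
  obtain w eta where yy: "Winv x = (w, eta)" by (cases "Winv x")
  have "Wact_root (Winv x) (2, 1, 1) \<in> Rneg 2" "Wact_root (Winv x) (1, 2, 0) \<in> Rneg 2"
    using a b img_iff[OF x] by (auto simp: alpha_simple_def numeral_2_eq_2)
  then have "(w 2, w 1, 1 - (eta 2 - eta 1)) \<in> Rneg 2" "(w 1, w 2, 0 - (eta 1 - eta 2)) \<in> Rneg 2"
    unfolding yy by (auto simp: Wact_root_def)
  then show False unfolding Rneg_iff by linarith
qed

lemma sgen_comm:
  assumes N: "2 \<le> N" and s: "s < N" and t: "t < N" and eq: "Wact_root (sgen N s) (al N t) = al N t"
  shows "Wmult (sgen N s) (sgen N t) = Wmult (sgen N t) (sgen N s)"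
  using s_root_conj[OF sgen_Wset[OF N s], of "al N t"] eq by (simp add: sgen_def)

lemma sgen_braid:
  assumes N: "2 \<le> N" and s: "s < N" and t: "t < N" and a: "adjP N s t"
  shows "Wmult (sgen N s) (Wmult (sgen N t) (sgen N s)) = Wmult (sgen N t) (Wmult (sgen N s) (sgen N t))"
proof -
  have 1: "Wmult (sgen N s) (Wmult (sgen N t) (sgen N s)) = s_root (Wact_root (sgen N s) (al N t))"
  proof -
    have "Wmult (sgen N s) (Wmult (sgen N t) (sgen N s)) = Wmult (Wmult (sgen N s) (s_root (al N t))) (sgen N s)"
      by (simp add: Wmult_assoc sgen_def)
    also have "\<dots> = Wmult (Wmult (s_root (Wact_root (sgen N s) (al N t))) (sgen N s)) (sgen N s)"
      using s_root_conj[OF sgen_Wset[OF N s], of "al N t"] by simp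
    also have "\<dots> = s_root (Wact_root (sgen N s) (al N t))"
      by (simp add: Wmult_assoc sgen_invol)
    finally show ?thesis .
  qed
  have 2: "Wmult (sgen N t) (Wmult (sgen N s) (sgen N t)) = s_root (Wact_root (sgen N t) (al N s))"
  proof -
    have "Wmult (sgen N t) (Wmult (sgen N s) (sgen N t)) = Wmult (Wmult (sgen N t) (s_root (al N s))) (sgen N t)"
      by (simp add: Wmult_assoc sgen_def)
    also have "\<dots> = Wmult (Wmult (s_root (Wact_root (sgen N t) (al N s))) (sgen N t)) (sgen N t)"
      using s_root_conj[OF sgen_Wset[OF N t], of "al N s"] by simp
    also have "\<dots> = s_root (Wact_root (sgen N t) (al N s))"
      by (simp add: Wmult_assoc sgen_invol)
    finally show ?thesis .
  qed
  show ?thesis using 1 2 a by (simp add: adjP_def)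
qed

lemma exchange:
  assumes N: "2 \<le> N"
  shows "set u \<subseteq> {..<N} \<Longrightarrow> \<gamma> \<in> Rpos N \<Longrightarrow> \<gamma> \<in> Wact_root (Wof N u) ` Rneg N \<Longrightarrow>
    \<exists>u'. length u' + 1 = length u \<and> set u' \<subseteq> set u \<and> Wmult (s_root \<gamma>) (Wof N u) = Wof N u'"
proof (induction u arbitrary: \<gamma>)
  case Nil
  then show ?case using Rpos_Rneg_disj[of \<gamma> N] by auto
next
  case (Cons m u0)
  have m: "m < N" using Cons by auto
  have u0: "set u0 \<subseteq> {..<N}" using Cons by auto
  show ?case
  proof (cases "\<gamma> = al N m")
    case True
    have "Wmult (s_root \<gamma>) (Wof N (m # u0)) = Wof N u0"
      by (simp add: True Wof_Cons sgen_def[symmetric] Wmult_assoc[symmetric] sgen_invol)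
    then show ?thesis by (intro exI[of _ u0]) auto
  next
    case False
    let ?g = "Wact_root (sgen N m) \<gamma>"
    have gpos: "?g \<in> Rpos N"
      using simple_refl[OF N m Rpos_Rset[OF Cons.prems(2)]] Cons.prems(2) False by blast
    have gimg: "?g \<in> Wact_root (Wof N u0) ` Rneg N"
      using Cons.prems(3) img_sgen by (simp add: Wof_Cons)
    obtain u0' where u0': "length u0' + 1 = length u0" "set u0' \<subseteq> set u0"
      "Wmult (s_root ?g) (Wof N u0) = Wof N u0'"
      using Cons.IH[OF u0 gpos gimg] by blast
    have conj: "Wmult (sgen N m) (s_root ?g) = Wmult (s_root \<gamma>) (sgen N m)"
      using s_root_conj[OF sgen_Wset[OF N m], of ?g] by (simp add: sgen_act_invol)
    have "Wmult (s_root \<gamma>) (Wof N (m # u0)) = Wof N (m # u0')"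
      by (simp add: Wof_Cons u0'(3)[symmetric] Wmult_assoc[symmetric] conj)
    then show ?thesis using u0' by (intro exI[of _ "m # u0'"]) auto
  qed
qed

definition red :: "nat \<Rightarrow> nat list \<Rightarrow> bool" where
  "red N u \<longleftrightarrow> set u \<subseteq> {..<N} \<and> lengthW N (Wof N u) = length u"

lemma red_descent:
  assumes N: "2 \<le> N" and r: "red N (s # u)"
  shows "al N s \<in> Wact_root (Wof N (s # u)) ` Rneg N"
proof (rule ccontr)
  assume nn: "\<not> ?thesis"
  have s: "s < N" and u: "set u \<subseteq> {..<N}" using r by (auto simp: red_def)
  have x: "Wof N (s # u) \<in> Wset N" using Wof_Wset N r by (auto simp: red_def)
  have "al N s \<in> Wact_root (Wof N (s # u)) ` Rpos N" using length_left_cases[OF N s x] nn by blast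
  then have "lengthW N (Wmult (sgen N s) (Wof N (s # u))) = lengthW N (Wof N (s # u)) + 1"
    using length_left(1)[OF N s x] by blast
  moreover have "Wmult (sgen N s) (Wof N (s # u)) = Wof N u"
    by (simp add: Wof_Cons Wmult_assoc[symmetric] sgen_invol)
  ultimately show False using word_bound[OF N u] r by (simp add: red_def)
qed

lemma red_tail:
  assumes N: "2 \<le> N" and r: "red N (s # u)"
  shows "red N u"
proof -
  have s: "s < N" and u: "set u \<subseteq> {..<N}" using r by (auto simp: red_def)
  have "lengthW N (Wof N (s # u)) \<le> lengthW N (Wof N u) + 1"
  proof -
    have "Wof N (s # u) = Wmult (sgen N s) (Wof N u)" by (simp add: Wof_Cons)
    then show ?thesis using length_left_le(2)[OF N s Wof_Wset[OF N u]] length_left_le(1)[OF N s Wof_Wset[OF N u]] by simp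
  qed
  then show ?thesis using word_bound[OF N u] r u by (simp add: red_def)
qed

lemma exchange_red:
  assumes N: "2 \<le> N" and r: "red N u" and t: "t < N" and d: "al N t \<in> Wact_root (Wof N u) ` Rneg N"
  shows "\<exists>u''. red N (t # u'') \<and> Wof N (t # u'') = Wof N u \<and> length u'' + 1 = length u"
proof -
  have u: "set u \<subseteq> {..<N}" using r by (simp add: red_def)
  obtain u'' where e: "length u'' + 1 = length u" "set u'' \<subseteq> set u" "Wmult (s_root (al N t)) (Wof N u) = Wof N u''"
    using exchange[OF N u alpha_Rpos[OF N t] d] by blast
  have e3: "Wof N u'' = Wmult (sgen N t) (Wof N u)" using e(3) by (simp add: sgen_def)
  have w: "Wof N (t # u'') = Wof N u"
    by (simp add: Wof_Cons e3 Wmult_assoc[symmetric] sgen_invol)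
  show ?thesis using w e r u t by (intro exI[of _ u'']) (auto simp: red_def)
qed


definition Fw :: "(nat \<Rightarrow> 'b::monoid_mult) \<Rightarrow> nat list \<Rightarrow> 'b" where
  "Fw \<phi> u = foldr (\<lambda>j acc. \<phi> j * acc) u 1"

lemma Fw_Nil[simp]: "Fw \<phi> [] = 1" by (simp add: Fw_def)
lemma Fw_Cons[simp]: "Fw \<phi> (s # u) = \<phi> s * Fw \<phi> u" by (simp add: Fw_def)

lemma Wof_strip: "Wof N u = Wmult (sgen N t) (Wof N (t # u))"
  by (simp add: Wof_Cons Wmult_assoc[symmetric] sgen_invol)

lemma red_Wset: "2 \<le> N \<Longrightarrow> red N u \<Longrightarrow> Wof N u \<in> Wset N"
  by (simp add: red_def Wof_Wset)

lemma side_comm: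
  fixes \<phi> :: "nat \<Rightarrow> 'b::monoid_mult"
  assumes N: "2 \<le> N" and r: "red N (s # u1)" and t: "t < N"
    and eq: "Wact_root (sgen N s) (al N t) = al N t"
    and dt: "al N t \<in> Wact_root (Wof N (s # u1)) ` Rneg N"
    and IH: "\<And>u' v'. length u' < length (s # u1) \<Longrightarrow> red N u' \<Longrightarrow> red N v' \<Longrightarrow> Wof N u' = Wof N v' \<Longrightarrow> Fw \<phi> u' = Fw \<phi> v'"
  shows "\<exists>u2. red N u2 \<and> length u2 + 2 = length (s # u1) \<and> Fw \<phi> (s # u1) = \<phi> s * (\<phi> t * Fw \<phi> u2) \<and>
     Wof N u2 = Wmult (sgen N t) (Wmult (sgen N s) (Wof N (s # u1)))"
proof -
  have ru1: "red N u1" using red_tail[OF N r] .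
  have d1: "al N t \<in> Wact_root (Wof N u1) ` Rneg N"
    using dt eq img_sgen[of "al N t" N s "Wof N (s # u1)" "Rneg N"] Wof_strip[of N u1 s] by simp
  obtain u2 where u2: "red N (t # u2)" "Wof N (t # u2) = Wof N u1" "length u2 + 1 = length u1"
    using exchange_red[OF N ru1 t d1] by blast
  have "Fw \<phi> u1 = Fw \<phi> (t # u2)" using IH[OF _ ru1 u2(1) u2(2)[symmetric]] by simp
  moreover have "Wof N u2 = Wmult (sgen N t) (Wmult (sgen N s) (Wof N (s # u1)))"
    using Wof_strip[of N u2 t] Wof_strip[of N u1 s] u2(2) by simp
  ultimately show ?thesis using red_tail[OF N u2(1)] u2(3) by (intro exI[of _ u2]) auto
qed

lemma side_braid:
  fixes \<phi> :: "nat \<Rightarrow> 'b::monoid_mult"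
  assumes N: "2 \<le> N" and r: "red N (s # u1)" and s: "s < N" and t: "t < N" and a: "adjP N s t"
    and dt: "al N t \<in> Wact_root (Wof N (s # u1)) ` Rneg N"
    and ds: "al N s \<in> Wact_root (Wof N (s # u1)) ` Rneg N"
    and IH: "\<And>u' v'. length u' < length (s # u1) \<Longrightarrow> red N u' \<Longrightarrow> red N v' \<Longrightarrow> Wof N u' = Wof N v' \<Longrightarrow> Fw \<phi> u' = Fw \<phi> v'"
  shows "\<exists>u3. red N u3 \<and> length u3 < length (s # u1) \<and> Fw \<phi> (s # u1) = \<phi> s * (\<phi> t * (\<phi> s * Fw \<phi> u3)) \<and>
     Wof N u3 = Wmult (sgen N s) (Wmult (sgen N t) (Wmult (sgen N s) (Wof N (s # u1))))"
proof -
  let ?x = "Wof N (s # u1)"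
  let ?g = "Wact_root (sgen N s) (al N t)"
  have x: "?x \<in> Wset N" using red_Wset[OF N r] .
  have ru1: "red N u1" using red_tail[OF N r] .
  have g1: "Wact_root (sgen N t) (al N s) = ?g" and g2: "sumrel (al N s) (al N t) ?g" using a by (auto simp: adjP_def)
  have gR: "?g \<in> Rset N" using Wact_root_Rset[OF sgen_Wset[OF N s] alpha_Rset[OF N t]] .
  have gneg: "?g \<in> Wact_root ?x ` Rneg N" using sum_neg_img[OF x g2 gR ds dt] .
  have d1: "al N t \<in> Wact_root (Wof N u1) ` Rneg N"
    using gneg img_sgen[of "al N t" N s ?x "Rneg N"] Wof_strip[of N u1 s] by simp
  obtain u2 where u2: "red N (t # u2)" "Wof N (t # u2) = Wof N u1" "length u2 + 1 = length u1"
    using exchange_red[OF N ru1 t d1] by blast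
  have ru2: "red N u2" using red_tail[OF N u2(1)] .
  have F1: "Fw \<phi> u1 = \<phi> t * Fw \<phi> u2" using IH[OF _ ru1 u2(1) u2(2)[symmetric]] by simp
  have w2: "Wof N u2 = Wmult (sgen N t) (Wmult (sgen N s) ?x)"
    using Wof_strip[of N u2 t] Wof_strip[of N u1 s] u2(2) by simp
  have "Wact_root (sgen N s) (Wact_root (sgen N t) (al N s)) = al N t"
    using g1 sgen_act_invol by simp
  then have d2: "al N s \<in> Wact_root (Wof N u2) ` Rneg N"
    using dt unfolding w2 img_sgen by simp
  obtain u3 where u3: "red N (s # u3)" "Wof N (s # u3) = Wof N u2" "length u3 + 1 = length u2"
    using exchange_red[OF N ru2 s d2] by blast
  have F2: "Fw \<phi> u2 = \<phi> s * Fw \<phi> u3" using IH[OF _ ru2 u3(1) u3(2)[symmetric]] u2(3) by simp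
  have w3: "Wof N u3 = Wmult (sgen N s) (Wof N u2)"
    using Wof_strip[of N u3 s] u3(2) by simp
  show ?thesis using red_tail[OF N u3(1)] u3(3) u2(3) F1 F2 w3 w2
    by (intro exI[of _ u3]) auto
qed

lemma matsumoto:
  fixes \<phi> :: "nat \<Rightarrow> 'b::monoid_mult"
  assumes N: "2 \<le> N"
    and comm: "\<And>s t. s < N \<Longrightarrow> t < N \<Longrightarrow> s \<noteq> t \<Longrightarrow> Wact_root (sgen N s) (al N t) = al N t \<Longrightarrow> \<phi> s * \<phi> t = \<phi> t * \<phi> s"
    and braid: "\<And>s t. s < N \<Longrightarrow> t < N \<Longrightarrow> adjP N s t \<Longrightarrow> \<phi> s * (\<phi> t * \<phi> s) = \<phi> t * (\<phi> s * \<phi> t)"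
  shows "red N u \<Longrightarrow> red N v \<Longrightarrow> Wof N u = Wof N v \<Longrightarrow> Fw \<phi> u = Fw \<phi> v"
proof (induction "length u" arbitrary: u v rule: less_induct)
  case less
  have len: "length v = length u" using less.prems by (simp add: red_def)
  show ?case
  proof (cases u)
    case Nil
    then show ?thesis using len by simp
  next
    case (Cons s u1)
    obtain t v1 where v: "v = t # v1" using len Cons by (cases v) auto
    let ?x = "Wof N u"
    have x: "?x \<in> Wset N" using red_Wset[OF N less.prems(1)] .
    have ru: "red N (s # u1)" and rv: "red N (t # v1)" using less.prems Cons v by auto
    have s: "s < N" and t: "t < N" using ru rv by (auto simp: red_def)
    have ds: "al N s \<in> Wact_root ?x ` Rneg N" using red_descent[OF N ru] Cons by simp
    have dt: "al N t \<in> Wact_root ?x ` Rneg N" using red_descent[OF N rv] v less.prems(3) by simp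
    have IHu: "Fw \<phi> u' = Fw \<phi> v'" if "length u' < length (s # u1)" "red N u'" "red N v'" "Wof N u' = Wof N v'" for u' v'
      using less.hyps[of u' v'] that Cons by simp
    have IHv: "Fw \<phi> u' = Fw \<phi> v'" if "length u' < length (t # v1)" "red N u'" "red N v'" "Wof N u' = Wof N v'" for u' v'
      using less.hyps[of u' v'] that len v Cons by simp
    have xu: "Wof N (s # u1) = ?x" and xv: "Wof N (t # v1) = ?x" using Cons v less.prems(3) by auto
    have dtu: "al N t \<in> Wact_root (Wof N (s # u1)) ` Rneg N" using dt xu by simp
    have dsu: "al N s \<in> Wact_root (Wof N (s # u1)) ` Rneg N" using ds xu by simp
    have dtv: "al N t \<in> Wact_root (Wof N (t # v1)) ` Rneg N" using dt xv by simp
    have dsv: "al N s \<in> Wact_root (Wof N (t # v1)) ` Rneg N" using ds xv by simp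
    show ?thesis
    proof (cases "s = t")
      case True
      have "Wof N u1 = Wof N v1" using Wof_strip[of N u1 s] Wof_strip[of N v1 t] xu xv True by simp
      then have "Fw \<phi> u1 = Fw \<phi> v1" using IHu[OF _ red_tail[OF N ru] red_tail[OF N rv]] by simp
      then show ?thesis using Cons v True by simp
    next
      case st: False
      show ?thesis
      proof (cases "Wact_root (sgen N s) (al N t) = al N t")
        case eq: True
        have eq': "Wact_root (sgen N t) (al N s) = al N s" using adj_comm[OF N s t st eq] .
        obtain u2 where u2: "red N u2" "length u2 + 2 = length (s # u1)" "Fw \<phi> (s # u1) = \<phi> s * (\<phi> t * Fw \<phi> u2)"
            "Wof N u2 = Wmult (sgen N t) (Wmult (sgen N s) (Wof N (s # u1)))"
          using side_comm[OF N ru t eq dtu IHu] by blast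
        obtain v2 where v2: "red N v2" "length v2 + 2 = length (t # v1)" "Fw \<phi> (t # v1) = \<phi> t * (\<phi> s * Fw \<phi> v2)"
            "Wof N v2 = Wmult (sgen N s) (Wmult (sgen N t) (Wof N (t # v1)))"
          using side_comm[OF N rv s eq' dsv IHv] by blast
        have "Wof N u2 = Wof N v2" unfolding u2(4) v2(4) xu xv
          using sgen_comm[OF N s t eq] by (simp add: Wmult_assoc[symmetric])
        then have "Fw \<phi> u2 = Fw \<phi> v2" using IHu[OF _ u2(1) v2(1)] u2(2) by simp
        moreover have "\<phi> s * (\<phi> t * Fw \<phi> u2) = \<phi> t * (\<phi> s * Fw \<phi> u2)"
          using comm[OF s t st eq] by (simp add: mult.assoc[symmetric])
        ultimately show ?thesis using u2(3) v2(3) Cons v by simp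
      next
        case ne: False
        show ?thesis
        proof (cases "N = 2")
          case True
          then have "(s = 0 \<and> t = 1) \<or> (s = 1 \<and> t = 0)" using s t st by auto
          then show ?thesis using N2_contra[of ?x] x ds dt True by (auto simp del: One_nat_def)
        next
          case False
          then have N3: "3 \<le> N" using N by simp
          have a: "adjP N s t" using nonfix_adjP[OF N3 s t st ne] .
          have a': "adjP N t s" using adjP_sym[OF a] .
          obtain u3 where u3: "red N u3" "length u3 < length (s # u1)"
              "Fw \<phi> (s # u1) = \<phi> s * (\<phi> t * (\<phi> s * Fw \<phi> u3))"
              "Wof N u3 = Wmult (sgen N s) (Wmult (sgen N t) (Wmult (sgen N s) (Wof N (s # u1))))"
            using side_braid[OF N ru s t a dtu dsu IHu] by blast
          obtain v3 where v3: "red N v3" "length v3 < length (t # v1)"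
              "Fw \<phi> (t # v1) = \<phi> t * (\<phi> s * (\<phi> t * Fw \<phi> v3))"
              "Wof N v3 = Wmult (sgen N t) (Wmult (sgen N s) (Wmult (sgen N t) (Wof N (t # v1))))"
            using side_braid[OF N rv t s a' dsv dtv IHv] by blast
          have "Wof N u3 = Wof N v3" unfolding u3(4) v3(4) xu xv
            using sgen_braid[OF N s t a] by (simp add: Wmult_assoc[symmetric])
          then have "Fw \<phi> u3 = Fw \<phi> v3" using IHu[OF u3(2) u3(1) v3(1)] by simp
          moreover have "\<phi> s * (\<phi> t * (\<phi> s * Fw \<phi> u3)) = \<phi> t * (\<phi> s * (\<phi> t * Fw \<phi> u3))"
            using braid[OF s t a] by (simp add: mult.assoc[symmetric])
          ultimately show ?thesis using u3(3) v3(3) Cons v by simp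
        qed
      qed
    qed
  qed
qed


lemma num_comm: "numeral n * (y::'a::ring_1) = y * numeral n"
  using mult_of_nat_commute[of "numeral n" y] by simp

lemma braid_alg:
  fixes a b x y :: "'a::ring_1"
  assumes aa: "a*a = 1" and bb: "b*b = 1" and aba: "a*(b*a) = b*(a*b)"
   and xy: "x*y = y*x"
   and r1: "a*x + x*a = -2" and r2: "a*y = (x+y)*a + 1" and r3: "b*x = (x+y)*b + 1" and r4: "b*y + y*b = -2"
  shows "(1 + a*x)*((1 + b*y)*(1 + a*x)) = (1 + b*y)*((1 + a*x)*(1 + b*y))"
proof -
  have xa: "x*a = -(a*x) - 2"
  proof -
    have "x*a = (a*x + x*a) - a*x" by simp
    then show ?thesis using r1 by simp
  qed
  have yb: "y*b = -(b*y) - 2"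
  proof -
    have "y*b = (b*y + y*b) - b*y" by simp
    then show ?thesis using r4 by simp
  qed
  have ya: "y*a = a*x + a*y + 1"
  proof -
    have "y*a = ((x+y)*a + 1) - x*a - 1" by (simp add: algebra_simps)
    also have "\<dots> = a*y - (-(a*x) - 2) - 1" using r2 xa by simp
    also have "\<dots> = a*x + a*y + 1" by (simp add: algebra_simps)
    finally show ?thesis .
  qed
  have xb: "x*b = b*x + b*y + 1"
  proof -
    have "x*b = ((x+y)*b + 1) - y*b - 1" by (simp add: algebra_simps)
    also have "\<dots> = b*x - (-(b*y) - 2) - 1" using r3 yb by simp
    also have "\<dots> = b*x + b*y + 1" by (simp add: algebra_simps)
    finally show ?thesis .
  qed
  have aaR: "a*(a*r) = r" for r using aa by (simp add: mult.assoc[symmetric])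
  have bbR: "b*(b*r) = r" for r using bb by (simp add: mult.assoc[symmetric])
  have axax: "a*x*a*x = -(x*x) - 2*(a*x)"
  proof -
    have "a*x*a*x = a*(x*a)*x" by (simp add: mult.assoc)
    also have "\<dots> = -(a*a*x*x) - a*2*x" by (simp add: xa algebra_simps)
    also have "\<dots> = -(x*x) - 2*(a*x)" by (simp add: aa num_comm mult.assoc)
    finally show ?thesis .
  qed
  have byby: "b*y*b*y = -(y*y) - 2*(b*y)"
  proof -
    have "b*y*b*y = b*(y*b)*y" by (simp add: mult.assoc)
    also have "\<dots> = -(b*b*y*y) - b*2*y" by (simp add: yb algebra_simps)
    also have "\<dots> = -(y*y) - 2*(b*y)" by (simp add: bb num_comm mult.assoc)
    finally show ?thesis .
  qed
  have e1: "(x+y)*y*a = a*y*(x+y)"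
  proof -
    have xya: "(x+y)*a = a*y - 1"
    proof -
      have "(x+y)*a = x*a + y*a" by (simp add: distrib_right)
      also have "\<dots> = (-(a*x) - 2) + (a*x + a*y + 1)" by (simp only: xa ya)
      also have "\<dots> = a*y - 1" by (simp add: algebra_simps)
      finally show ?thesis .
    qed
    have "(x+y)*y*a = (x+y)*(y*a)" by (simp add: mult.assoc)
    also have "\<dots> = (x+y)*a*(x+y) + (x+y)" by (simp only: ya) (simp add: algebra_simps)
    also have "\<dots> = (a*y - 1)*(x+y) + (x+y)" by (simp only: xya)
    also have "\<dots> = a*y*(x+y)" by (simp add: algebra_simps)
    finally show ?thesis .
  qed
  have e2: "(x+y)*x*b = b*x*(x+y)"
  proof -
    have xyb: "(x+y)*b = b*x - 1"
    proof -
      have "(x+y)*b = x*b + y*b" by (simp add: distrib_right)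
      also have "\<dots> = (b*x + b*y + 1) + (-(b*y) - 2)" by (simp only: xb yb)
      also have "\<dots> = b*x - 1" by (simp add: algebra_simps)
      finally show ?thesis .
    qed
    have "(x+y)*x*b = (x+y)*(x*b)" by (simp add: mult.assoc)
    also have "\<dots> = (x+y)*b*(x+y) + (x+y)" by (simp only: xb) (simp add: algebra_simps)
    also have "\<dots> = (b*x - 1)*(x+y) + (x+y)" by (simp only: xyb)
    also have "\<dots> = b*x*(x+y)" by (simp add: algebra_simps)
    finally show ?thesis .
  qed
  have axbyax: "a*x*b*y*a*x = a*b*a*y*(x+y)*x + (x*x + y*x) + a*x"
  proof -
    have "a*x*b*y*a*x = a*(x*b)*y*a*x" by (simp add: mult.assoc)
    also have "\<dots> = a*(b*x + b*y + 1)*y*a*x" by (simp only: xb)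
    also have "\<dots> = a*b*((x+y)*y*a)*x + a*(y*a)*x" by (simp add: algebra_simps)
    also have "\<dots> = a*b*(a*y*(x+y))*x + a*(a*x + a*y + 1)*x" by (simp only: e1 ya)
    also have "\<dots> = a*b*a*y*(x+y)*x + (x*x + y*x) + a*x"
      by (simp add: algebra_simps aaR)
    finally show ?thesis .
  qed
  have byaxby: "b*y*a*x*b*y = b*a*b*x*(x+y)*y + (x*y + y*y) + b*y"
  proof -
    have "b*y*a*x*b*y = b*(y*a)*x*b*y" by (simp add: mult.assoc)
    also have "\<dots> = b*(a*x + a*y + 1)*x*b*y" by (simp only: ya)
    also have "\<dots> = b*a*((x+y)*x*b)*y + b*(x*b)*y" by (simp add: algebra_simps)
    also have "\<dots> = b*a*(b*x*(x+y))*y + b*(b*x + b*y + 1)*y" by (simp only: e2 xb)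
    also have "\<dots> = b*a*b*x*(x+y)*y + (x*y + y*y) + b*y"
      by (simp add: algebra_simps bbR)
    finally show ?thesis .
  qed
  have poly: "y*(x+y)*x = x*(x+y)*y"
  proof -
    have "y*(x+y)*x = y*x*x + y*y*x" by (simp add: algebra_simps)
    also have "\<dots> = x*x*y + x*y*y" using xy by (metis mult.assoc)
    also have "\<dots> = x*(x+y)*y" by (simp add: algebra_simps)
    finally show ?thesis .
  qed
  have aba': "a*b*a = b*a*b" using aba by (simp add: mult.assoc)
  have M: "a*b*a*y*(x+y)*x = b*a*b*x*(x+y)*y"
  proof -
    have "a*b*a*y*(x+y)*x = (a*b*a)*(y*(x+y)*x)" by (simp add: mult.assoc)
    also have "\<dots> = (b*a*b)*(x*(x+y)*y)" by (simp only: aba' poly)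
    also have "\<dots> = b*a*b*x*(x+y)*y" by (simp add: mult.assoc)
    finally show ?thesis .
  qed
  have L1: "(1 + a*x)*((1 + b*y)*(1 + a*x)) = 1 + 2*(a*x) + b*y + a*x*b*y + a*x*a*x + b*y*a*x + a*x*b*y*a*x"
    by (simp add: algebra_simps mult_2)
  have R1: "(1 + b*y)*((1 + a*x)*(1 + b*y)) = 1 + 2*(b*y) + a*x + b*y*a*x + b*y*b*y + a*x*b*y + b*y*a*x*b*y"
    by (simp add: algebra_simps mult_2)
  have lin: "1 + 2*A + B + C + (-X - 2*A) + D + (Mm + (X + P) + A) = 1 + 2*B + A + D + (-Yy - 2*B) + C + (Mm + (P + Yy) + B)"
    for A B C D X Yy P Mm :: 'a
    by (simp add: algebra_simps)
  show ?thesis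
    unfolding L1 R1 axax byby axbyax byaxby M xy[symmetric] by (rule lin)
qed


definition pr :: "root \<Rightarrow> root \<Rightarrow> int" where
  "pr rho r = (case rho of (p, q, _) \<Rightarrow> case r of (a, b, _) \<Rightarrow> (ind a p - ind b p) - (ind a q - ind b q))"

lemma ind_sym: "ind a p = ind p a" by (simp add: ind_def)

lemma pr_self: "p \<noteq> q \<Longrightarrow> pr (p, q, k) (p, q, k') = 2"
  by (simp add: pr_def ind_def)

lemma pr_sumrel: assumes "sumrel a b c" "a \<in> Rset N" "b \<in> Rset N"
  shows "pr a b = -1 \<and> pr b a = -1"
proof -
  from assms(1) obtain p q r k1 k2 where pr0: "p \<noteq> r" and
    d: "(a = (p, q, k1) \<and> b = (q, r, k2)) \<or> (b = (p, q, k1) \<and> a = (q, r, k2))"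
    unfolding sumrel_def by blast
  from d show ?thesis
  proof (elim disjE conjE)
    assume a: "a = (p, q, k1)" and b: "b = (q, r, k2)"
    have "p \<noteq> q" "q \<noteq> r" using assms(2,3) a b by (auto simp: Rset_def)
    then show ?thesis using pr0 unfolding a b by (simp add: pr_def ind_def)
  next
    assume b: "b = (p, q, k1)" and a: "a = (q, r, k2)"
    have "p \<noteq> q" "q \<noteq> r" using assms(2,3) a b by (auto simp: Rset_def)
    then show ?thesis using pr0 unfolding a b by (simp add: pr_def ind_def)
  qed
qed

lemma pr_fix: assumes "p \<noteq> q" "Wact_root (s_root (p, q, k0)) r = r"
  shows "pr (p, q, k0) r = 0"
proof -
  obtain a b k where rr: "r = (a, b, k)" by (cases r)
  have "transpose p q a = a" "transpose p q b = b" using assms(2) unfolding rr s_root_eq Wact_root_def by auto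
  then have "a \<noteq> p" "a \<noteq> q" "b \<noteq> p" "b \<noteq> q" using assms(1) by (auto simp: transpose_def split: if_splits)
  then show ?thesis unfolding rr by (simp add: pr_def ind_def)
qed

lemma negr_Rset_pair: "negr (p, q, k) = (q, p, -k)" by (simp add: negr_def)

locale dd =
  fixes N :: nat and \<iota> :: "complex \<Rightarrow> 'a::ring_1" and g :: "Welt \<Rightarrow> 'a" and Y :: "nat \<Rightarrow> 'a" and Z :: 'a
  assumes N2: "2 \<le> N" and hom: "dDAHA_hom N \<iota> g Y Z"
begin

definition Hc :: "root \<Rightarrow> 'a" where
  "Hc r = (case r of (i, j, k) \<Rightarrow> Y i - Y j + of_int k * Z)"

lemma iota_one: "\<iota> 1 = 1" using hom by (simp add: dDAHA_hom_def)
lemma iota_add: "\<iota> (a + b) = \<iota> a + \<iota> b" using hom by (simp add: dDAHA_hom_def)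
lemma iota_zero: "\<iota> 0 = 0" using iota_add[of 0 0] by simp
lemma iota_uminus: "\<iota> (- a) = - \<iota> a"
proof -
  have "\<iota> a + \<iota> (- a) = 0" using iota_add[of a "-a"] iota_zero by simp
  then show ?thesis using neg_eq_iff_add_eq_0[of "\<iota> a" "\<iota> (-a)"] by simp
qed
lemma iota_nat: "\<iota> (of_nat n) = of_nat n"
  by (induction n) (simp_all add: iota_zero iota_add iota_one)
lemma iota_int: "\<iota> (of_int z) = of_int z"
proof (cases "0 \<le> z")
  case True
  then obtain n where "z = int n" using nonneg_int_cases by blast
  then show ?thesis using iota_nat[of n] by simp
next
  case False
  then obtain n where "z = - int n" by (intro that[of "nat (- z)"]) simp
  then show ?thesis using iota_nat[of n] iota_uminus[of "of_nat n"] by simp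
qed

lemma g_mult: "a \<in> Wset N \<Longrightarrow> b \<in> Wset N \<Longrightarrow> g (Wmult a b) = g a * g b"
  using hom by (simp add: dDAHA_hom_def)
lemma g_one: "g Wone = 1" using hom by (simp add: dDAHA_hom_def)
lemma YY: "Y i * Y j = Y j * Y i" using hom by (simp add: dDAHA_hom_def)
lemma YZ: "Y i * Z = Z * Y i" using hom by (simp add: dDAHA_hom_def)

lemma oi: "x * (of_int k * y) = of_int k * (x * (y::'a))"
  by (metis mult.assoc mult_of_int_commute)

lemma YH: "Y c * Hc r = Hc r * Y c"
proof -
  obtain a b k where r: "r = (a, b, k)" by (cases r)
  have "Y c * Hc r = Y c * Y a - Y c * Y b + of_int k * (Y c * Z)"
    by (simp add: r Hc_def ring_distribs oi)
  also have "\<dots> = Y a * Y c - Y b * Y c + of_int k * (Z * Y c)"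
    by (simp only: YY[of c] YZ)
  also have "\<dots> = Hc r * Y c"
    by (simp add: r Hc_def ring_distribs mult.assoc)
  finally show ?thesis .
qed

lemma ZH: "Z * Hc r = Hc r * Z"
proof -
  obtain a b k where r: "r = (a, b, k)" by (cases r)
  have "Z * Hc r = Z * Y a - Z * Y b + of_int k * (Z * Z)"
    by (simp add: r Hc_def ring_distribs oi)
  also have "\<dots> = Y a * Z - Y b * Z + of_int k * (Z * Z)"
    by (simp only: YZ)
  also have "\<dots> = Hc r * Z"
    by (simp add: r Hc_def ring_distribs mult.assoc)
  finally show ?thesis .
qed

lemma Hc_comm: "Hc r * Hc q = Hc q * Hc r"
proof -
  obtain a b k where q: "q = (a, b, k)" by (cases q)
  have hq: "Hc q = Y a - Y b + of_int k * Z" by (simp add: q Hc_def)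
  have "Hc r * Hc q = Hc r * Y a - Hc r * Y b + of_int k * (Hc r * Z)"
    by (simp add: hq ring_distribs oi)
  also have "\<dots> = Y a * Hc r - Y b * Hc r + of_int k * (Z * Hc r)"
    by (simp only: YH ZH)
  also have "\<dots> = Hc q * Hc r"
    by (simp add: hq ring_distribs mult.assoc)
  finally show ?thesis .
qed

lemma hmap_coroot: assumes r: "r \<in> Rset N" shows "hmap \<iota> Y Z N (coroot r) = Hc r"
proof -
  obtain i j k where rr: "r = (i, j, k)" by (cases r)
  have ij: "i \<in> {1..N}" "j \<in> {1..N}" using r rr by (auto simp: Rset_def)
  have "(\<Sum>l\<in>{1..N}. \<iota> (of_int (ind i l - ind j l)) * Y l) = (\<Sum>l\<in>{1..N}. (if l = i then Y l else 0) - (if l = j then Y l else 0))"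
    by (intro sum.cong refl) (subst iota_int, auto simp: ind_def)
  also have "\<dots> = Y i - Y j" using ij by (simp add: sum_subtractf)
  finally show ?thesis unfolding rr by (simp add: hmap_def coroot_def Hc_def iota_int)
qed

lemma coroot_tset: "r \<in> Rset N \<Longrightarrow> coroot r \<in> tset N"
  by (cases r) (auto simp: coroot_def tset_def Rset_def ind_def)

lemma Wact_t_coroot: assumes a: "a \<in> Wset N" and r: "r \<in> Rset N"
  shows "Wact_t N a (coroot r) = coroot (Wact_root a r)"
proof -
  obtain i j k where rr: "r = (i, j, k)" by (cases r)
  obtain w eta where aa: "a = (w, eta)" by (cases a)
  have w: "w permutes {1..N}" using a aa by (simp add: Wset_def)
  have ij: "i \<in> {1..N}" "j \<in> {1..N}" using r rr by (auto simp: Rset_def)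
  have f: "(ind i (inv w l) :: int) = ind (w i) l" for i l
    unfolding ind_def using permutes_inv_eq[OF w, of l i] by auto
  have "(\<Sum>l\<in>{1..N}. (of_int (eta l) :: complex) * (of_int (ind i l) - of_int (ind j l)))
      = (\<Sum>l\<in>{1..N}. (if l = i then of_int (eta l) else 0) - (if l = j then of_int (eta l) else 0))"
    by (intro sum.cong) (auto simp: ind_def)
  also have "\<dots> = of_int (eta i) - of_int (eta j)" using ij by (simp add: sum_subtractf)
  finally have s: "(\<Sum>l\<in>{1..N}. (of_int (eta l) :: complex) * (of_int (ind i l) - of_int (ind j l))) = of_int (eta i) - of_int (eta j)" .
  show ?thesis unfolding rr aa using s
    by (simp add: Wact_t_def coroot_def Wact_root_def f fun_eq_iff)
qed

lemma root_eval_coroot: "root_eval rho (coroot r) = of_int (pr rho r)"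
  by (cases rho; cases r) (simp add: root_eval_def coroot_def pr_def)

lemma rel_sgen: assumes m: "m < N" and r: "r \<in> Rset N"
  shows "g (sgen N m) * Hc r = Hc (Wact_root (sgen N m) r) * g (sgen N m) - of_int (pr (alpha_simple N m) r)"
proof -
  have sr: "Wact_root (sgen N m) r \<in> Rset N" using Wact_root_Rset[OF sgen_Wset[OF N2 m] r] .
  have "g (sgen N m) * hmap \<iota> Y Z N (coroot r) - hmap \<iota> Y Z N (Wact_t N (sgen N m) (coroot r)) * g (sgen N m)
      = - \<iota> (root_eval (alpha_simple N m) (coroot r))"
    using hom coroot_tset[OF r] m by (simp add: dDAHA_hom_def)
  then have e: "g (sgen N m) * Hc r - Hc (Wact_root (sgen N m) r) * g (sgen N m) = - of_int (pr (alpha_simple N m) r)"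
    using hmap_coroot[OF r] hmap_coroot[OF sr] Wact_t_coroot[OF sgen_Wset[OF N2 m] r]
    by (simp only: root_eval_coroot iota_int)
  have "g (sgen N m) * Hc r = (g (sgen N m) * Hc r - Hc (Wact_root (sgen N m) r) * g (sgen N m)) + Hc (Wact_root (sgen N m) r) * g (sgen N m)"
    by simp
  then show ?thesis unfolding e by simp
qed

lemma rel_pi: assumes r: "r \<in> Rset N"
  shows "g (piW N) * Hc r = Hc (Wact_root (piW N) r) * g (piW N)"
proof -
  have sr: "Wact_root (piW N) r \<in> Rset N" using Wact_root_Rset[OF piW_Wset[OF N2] r] .
  have "g (piW N) * hmap \<iota> Y Z N (coroot r) = hmap \<iota> Y Z N (Wact_t N (piW N) (coroot r)) * g (piW N)"
    using hom coroot_tset[OF r] by (simp add: dDAHA_hom_def)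
  then show ?thesis
    using hmap_coroot[OF r] hmap_coroot[OF sr] Wact_t_coroot[OF piW_Wset[OF N2] r] by simp
qed

lemma Y_transpose: "p \<noteq> q \<Longrightarrow> Y (transpose p q a) = Y a - of_int (ind a p - ind a q) * (Y p - Y q)"
  by (auto simp: transpose_def ind_def)

lemma Hc_refl: assumes pq: "p \<noteq> q"
  shows "Hc (Wact_root (s_root (p, q, k0)) r) = Hc r - of_int (pr (p, q, k0) r) * Hc (p, q, k0)"
proof -
  obtain a b k where rr: "r = (a, b, k)" by (cases r)
  have e: "Wact_root (s_root (p, q, k0)) (a, b, k) = (transpose p q a, transpose p q b,
      k - (k0 * (ind a p - ind a q) - k0 * (ind b p - ind b q)))"
    unfolding s_root_eq by (simp add: Wact_root_def ind_sym)
  have gen: "(Ya - of_int u * P) - (Yb - of_int v * P) + of_int (k - (k0*u - k0*v)) * Z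
      = (Ya - Yb + of_int k * Z) - of_int (u - v) * (P + of_int k0 * Z)" for Ya Yb P :: 'a and u v :: int
  proof -
    have oiZ: "of_int a * (of_int b * Z) = of_int (a * b) * Z" for a b
      by (simp add: mult.assoc[symmetric])
    show ?thesis by (simp add: algebra_simps oiZ del: of_int_mult)
  qed
  have eq1: "ind a p - ind b p - (ind a q - ind b q) = (ind a p - ind a q) - (ind b p - (ind b q :: int))" by simp
  have "Hc (Wact_root (s_root (p, q, k0)) r) = Y (transpose p q a) - Y (transpose p q b) +
      of_int (k - (k0 * (ind a p - ind a q) - k0 * (ind b p - ind b q))) * Z"
    unfolding rr e by (simp add: Hc_def)
  also have "\<dots> = (Y a - of_int (ind a p - ind a q) * (Y p - Y q)) - (Y b - of_int (ind b p - ind b q) * (Y p - Y q)) +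
      of_int (k - (k0 * (ind a p - ind a q) - k0 * (ind b p - ind b q))) * Z"
    by (simp only: Y_transpose[OF pq])
  also have "\<dots> = (Y a - Y b + of_int k * Z) - of_int ((ind a p - ind a q) - (ind b p - ind b q)) * (Y p - Y q + of_int k0 * Z)"
    by (rule gen)
  also have "\<dots> = Hc r - of_int (pr (p, q, k0) r) * Hc (p, q, k0)"
    by (simp add: rr Hc_def pr_def eq1)
  finally show ?thesis .
qed

lemma Hc_sgen: assumes m: "m < N"
  shows "Hc (Wact_root (sgen N m) r) = Hc r - of_int (pr (alpha_simple N m) r) * Hc (alpha_simple N m)"
proof -
  obtain p q k where al: "alpha_simple N m = (p, q, k)" by (cases "alpha_simple N m")
  have "p \<noteq> q" using alpha_Rset[OF N2 m] al by (simp add: Rset_def)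
  then show ?thesis using Hc_refl[of p q k r] al by (simp add: sgen_def)
qed

end


context dd begin

definition phi :: "nat \<Rightarrow> 'a" where
  "phi m = 1 + g (sgen N m) * Hc (alpha_simple N m)"

lemma phi_gen_eq: "m < N \<Longrightarrow> phi_gen N \<iota> g Y Z m = phi m"
  by (simp add: phi_gen_def phi_def hmap_coroot alpha_Rset N2)

lemma Hc_negr: "Hc (negr r) = - Hc r"
  by (cases r) (simp add: negr_def Hc_def algebra_simps)

lemma Hc_sum: "sumrel a b c \<Longrightarrow> Hc c = Hc a + Hc b"
  unfolding sumrel_def by (auto simp: Hc_def algebra_simps)

lemma phi_inter: assumes m: "m < N" and r: "r \<in> Rset N"
  shows "phi m * Hc r = Hc (Wact_root (sgen N m) r) * phi m"
proof -
  let ?G = "g (sgen N m)" and ?H = "Hc (alpha_simple N m)" and ?c = "of_int (pr (alpha_simple N m) r) :: 'a"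
    and ?R = "Hc r" and ?R' = "Hc (Wact_root (sgen N m) r)"
  have rel: "?G * ?R = ?R' * ?G - ?c" by (rule rel_sgen[OF m r])
  have hs: "?R' = ?R - ?c * ?H" by (rule Hc_sgen[OF m])
  have "phi m * ?R = ?R + ?G * (?H * ?R)" by (simp add: phi_def algebra_simps)
  also have "\<dots> = ?R + (?G * ?R) * ?H" by (simp add: Hc_comm mult.assoc)
  also have "\<dots> = ?R + (?R' * ?G - ?c) * ?H" by (simp only: rel)
  also have "\<dots> = (?R - ?c * ?H) + ?R' * (?G * ?H)" by (simp add: algebra_simps)
  also have "\<dots> = ?R' * phi m" by (simp only: hs[symmetric]) (simp add: phi_def algebra_simps)
  finally show ?thesis .
qed

lemma al_pq: assumes m: "m < N" obtains p q k where "alpha_simple N m = (p, q, k)" "p \<noteq> q"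
  using alpha_Rset[OF N2 m] by (cases "alpha_simple N m") (auto simp: Rset_def)

lemma pr_fix_sgen: assumes m: "m < N" and fx: "Wact_root (sgen N m) r = r"
  shows "pr (alpha_simple N m) r = 0"
proof -
  obtain p q k where al: "alpha_simple N m = (p, q, k)" "p \<noteq> q" using al_pq[OF m] by blast
  show ?thesis using pr_fix[OF al(2)] fx al(1) by (simp add: sgen_def)
qed

lemma phi_comm:
  assumes s: "s < N" and t: "t < N" and st: "s \<noteq> t" and eq: "Wact_root (sgen N s) (al N t) = al N t"
  shows "phi s * phi t = phi t * phi s"
proof -
  have eq': "Wact_root (sgen N t) (al N s) = al N s" using adj_comm[OF N2 s t st eq] .
  let ?Gs = "g (sgen N s)" and ?Gt = "g (sgen N t)" and ?Hs = "Hc (al N s)" and ?Ht = "Hc (al N t)"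
  have c1: "?Gt * ?Hs = ?Hs * ?Gt"
    using rel_sgen[OF t alpha_Rset[OF N2 s]] eq' pr_fix_sgen[OF t eq'] by simp
  have c2: "?Gs * ?Ht = ?Ht * ?Gs"
    using rel_sgen[OF s alpha_Rset[OF N2 t]] eq pr_fix_sgen[OF s eq] by simp
  have gg: "?Gs * ?Gt = ?Gt * ?Gs"
    using sgen_comm[OF N2 s t eq] g_mult[OF sgen_Wset[OF N2 s] sgen_Wset[OF N2 t]]
      g_mult[OF sgen_Wset[OF N2 t] sgen_Wset[OF N2 s]] by simp
  have AB: "(?Gs * ?Hs) * (?Gt * ?Ht) = (?Gt * ?Ht) * (?Gs * ?Hs)"
  proof -
    have "(?Gs * ?Hs) * (?Gt * ?Ht) = ?Gs * (?Hs * ?Gt) * ?Ht" by (simp add: mult.assoc)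
    also have "\<dots> = (?Gs * ?Gt) * (?Hs * ?Ht)" by (simp add: c1[symmetric] mult.assoc)
    also have "\<dots> = (?Gt * ?Gs) * (?Ht * ?Hs)" by (simp only: gg Hc_comm[of "al N s"])
    also have "\<dots> = ?Gt * (?Gs * ?Ht) * ?Hs" by (simp add: mult.assoc)
    also have "\<dots> = (?Gt * ?Ht) * (?Gs * ?Hs)" by (simp add: c2 mult.assoc)
    finally show ?thesis .
  qed
  have "phi s * phi t = 1 + ?Gs * ?Hs + ?Gt * ?Ht + (?Gs * ?Hs) * (?Gt * ?Ht)"
    by (simp add: phi_def algebra_simps)
  also have "\<dots> = 1 + ?Gt * ?Ht + ?Gs * ?Hs + (?Gt * ?Ht) * (?Gs * ?Hs)"
    by (simp only: AB) (simp add: algebra_simps)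
  also have "\<dots> = phi t * phi s" by (simp add: phi_def algebra_simps)
  finally show ?thesis .
qed

lemma phi_braid:
  assumes s: "s < N" and t: "t < N" and a: "adjP N s t"
  shows "phi s * (phi t * phi s) = phi t * (phi s * phi t)"
proof -
  let ?Gs = "g (sgen N s)" and ?Gt = "g (sgen N t)" and ?Hs = "Hc (al N s)" and ?Ht = "Hc (al N t)"
  let ?gam = "Wact_root (sgen N s) (al N t)"
  have g1: "Wact_root (sgen N t) (al N s) = ?gam" and g2: "sumrel (al N s) (al N t) ?gam" using a by (auto simp: adjP_def)
  have Rs: "al N s \<in> Rset N" and Rt: "al N t \<in> Rset N" using alpha_Rset[OF N2] s t by auto
  have prs: "pr (al N s) (al N t) = -1" and prt: "pr (al N t) (al N s) = -1" using pr_sumrel[OF g2 Rs Rt] by auto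
  have hg: "Hc ?gam = ?Hs + ?Ht" using Hc_sum[OF g2] .
  have pss: "pr (al N s) (al N s) = 2" using al_pq[OF s] pr_self by metis
  have ptt: "pr (al N t) (al N t) = 2" using al_pq[OF t] pr_self by metis
  have aa: "?Gs * ?Gs = 1" using g_mult[OF sgen_Wset[OF N2 s] sgen_Wset[OF N2 s]] sgen_invol g_one by simp
  have bb: "?Gt * ?Gt = 1" using g_mult[OF sgen_Wset[OF N2 t] sgen_Wset[OF N2 t]] sgen_invol g_one by simp
  have aba: "?Gs * (?Gt * ?Gs) = ?Gt * (?Gs * ?Gt)"
  proof -
    have W: "sgen N s \<in> Wset N" "sgen N t \<in> Wset N" using sgen_Wset[OF N2] s t by auto
    have "?Gs * (?Gt * ?Gs) = g (Wmult (sgen N s) (Wmult (sgen N t) (sgen N s)))"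
      using g_mult W Wmult_Wset by simp
    also have "\<dots> = g (Wmult (sgen N t) (Wmult (sgen N s) (sgen N t)))" using sgen_braid[OF N2 s t a] by simp
    also have "\<dots> = ?Gt * (?Gs * ?Gt)" using g_mult W Wmult_Wset by simp
    finally show ?thesis .
  qed
  have r1: "?Gs * ?Hs + ?Hs * ?Gs = -2"
  proof -
    have "?Gs * ?Hs = Hc (negr (al N s)) * ?Gs - 2" using rel_sgen[OF s Rs] sgen_alpha[OF N2 s] pss by simp
    then show ?thesis by (simp add: Hc_negr)
  qed
  have r4: "?Gt * ?Ht + ?Ht * ?Gt = -2"
  proof -
    have "?Gt * ?Ht = Hc (negr (al N t)) * ?Gt - 2" using rel_sgen[OF t Rt] sgen_alpha[OF N2 t] ptt by simp
    then show ?thesis by (simp add: Hc_negr)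
  qed
  have r2: "?Gs * ?Ht = (?Hs + ?Ht) * ?Gs + 1"
    using rel_sgen[OF s Rt] prs hg by simp
  have r3: "?Gt * ?Hs = (?Hs + ?Ht) * ?Gt + 1"
    using rel_sgen[OF t Rs] prt hg g1 by simp
  show ?thesis unfolding phi_def
    using braid_alg[OF aa bb aba Hc_comm r1 r2 r3 r4] .
qed

lemma phi_matsumoto: "red N u \<Longrightarrow> red N v \<Longrightarrow> Wof N u = Wof N v \<Longrightarrow> Fw phi u = Fw phi v"
  using matsumoto[OF N2, of phi] phi_comm phi_braid by blast

lemma Fw_inter: "set u \<subseteq> {..<N} \<Longrightarrow> r \<in> Rset N \<Longrightarrow> Fw phi u * Hc r = Hc (Wact_root (Wof N u) r) * Fw phi u"
proof (induction u arbitrary: r)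
  case Nil then show ?case by simp
next
  case (Cons m u)
  have m: "m < N" and u: "set u \<subseteq> {..<N}" using Cons by auto
  have ur: "Wact_root (Wof N u) r \<in> Rset N" using Wact_root_Rset[OF Wof_Wset[OF N2 u] Cons.prems(2)] .
  have "Fw phi (m # u) * Hc r = phi m * (Fw phi u * Hc r)" by (simp add: mult.assoc)
  also have "\<dots> = (phi m * Hc (Wact_root (Wof N u) r)) * Fw phi u" using Cons.IH[OF u Cons.prems(2)] by (simp add: mult.assoc)
  also have "\<dots> = Hc (Wact_root (Wof N (m # u)) r) * Fw phi (m # u)"
    using phi_inter[OF m ur] by (simp add: Wof_Cons Wact_root_mult mult.assoc)
  finally show ?case .
qed

definition ginter :: "Welt \<Rightarrow> bool" where
  "ginter p \<longleftrightarrow> p \<in> Wset N \<and> (\<forall>r\<in>Rset N. g p * Hc r = Hc (Wact_root p r) * g p)"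

lemma ginter_one: "ginter Wone" by (simp add: ginter_def g_one)

lemma ginter_mult: assumes "ginter p" "ginter q" shows "ginter (Wmult p q)"
proof -
  have p: "p \<in> Wset N" and q: "q \<in> Wset N" using assms by (auto simp: ginter_def)
  have "g (Wmult p q) * Hc r = Hc (Wact_root (Wmult p q) r) * g (Wmult p q)" if r: "r \<in> Rset N" for r
  proof -
    have qr: "Wact_root q r \<in> Rset N" using Wact_root_Rset[OF q r] .
    have "g (Wmult p q) * Hc r = g p * (g q * Hc r)" by (simp add: g_mult[OF p q] mult.assoc)
    also have "\<dots> = (g p * Hc (Wact_root q r)) * g q" using assms(2) r by (simp add: ginter_def mult.assoc)
    also have "\<dots> = Hc (Wact_root (Wmult p q) r) * g (Wmult p q)"
      using assms(1) qr by (simp add: ginter_def mult.assoc g_mult[OF p q] Wact_root_mult)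
    finally show ?thesis .
  qed
  then show ?thesis using Wmult_Wset[OF p q] by (simp add: ginter_def)
qed

lemma ginter_pi: "ginter (piW N)"
  using rel_pi piW_Wset[OF N2] by (simp add: ginter_def)

lemma ginter_pi_inv: "ginter (Winv (piW N))"
proof -
  let ?P = "piW N" and ?Q = "Winv (piW N)"
  have P: "?P \<in> Wset N" using piW_Wset[OF N2] .
  have Q: "?Q \<in> Wset N" using Winv_Wset[OF P] .
  have qp: "g ?Q * g ?P = 1" using g_mult[OF Q P] Winv_Wmult[OF P] g_one by simp
  have pq: "g ?P * g ?Q = 1" using g_mult[OF P Q] Wmult_Winv[OF P] g_one by simp
  have "g ?Q * Hc r = Hc (Wact_root ?Q r) * g ?Q" if r: "r \<in> Rset N" for r
  proof -
    have qr: "Wact_root ?Q r \<in> Rset N" using Wact_root_Rset[OF Q r] .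
    have e: "Wact_root ?P (Wact_root ?Q r) = r" using Wact_root_Winv[OF P] .
    have "g ?Q * Hc r = g ?Q * (Hc r * (g ?P * g ?Q))" by (simp add: pq)
    also have "\<dots> = g ?Q * (Hc (Wact_root ?P (Wact_root ?Q r)) * g ?P) * g ?Q" by (simp add: e mult.assoc)
    also have "\<dots> = g ?Q * (g ?P * Hc (Wact_root ?Q r)) * g ?Q" using rel_pi[OF qr] by simp
    also have "\<dots> = (g ?Q * g ?P) * Hc (Wact_root ?Q r) * g ?Q" by (simp add: mult.assoc)
    also have "\<dots> = Hc (Wact_root ?Q r) * g ?Q" by (simp add: qp)
    finally show ?thesis .
  qed
  then show ?thesis using Q by (simp add: ginter_def)
qed

lemma ginter_Wpow: "ginter (Wpow (piW N) k)"
proof -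
  have "ginter ((Wmult (piW N) ^^ n) Wone)" for n
    by (induction n) (auto simp: ginter_one ginter_mult ginter_pi)
  moreover have "ginter ((Wmult (Winv (piW N)) ^^ n) Wone)" for n
    by (induction n) (auto simp: ginter_one ginter_mult ginter_pi_inv)
  ultimately show ?thesis by (simp add: Wpow_def)
qed

end


lemma same_block_sub: "same_block beta a b \<Longrightarrow> a \<le> c \<Longrightarrow> c \<le> b \<Longrightarrow> a \<le> d \<Longrightarrow> d \<le> b \<Longrightarrow> same_block beta c d"
  unfolding same_block_def by (meson le_less_trans order_trans linorder_not_le)

lemma Fw_append: "Fw \<phi> (u @ [j]) = Fw \<phi> u * \<phi> j"
  by (induction u) (auto simp: mult.assoc)

lemma simple_not_sum:
  assumes "(A, B, K1) \<in> Rpos N" "(B, C, K2) \<in> Rpos N" "m < N" "2 \<le> N"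
  shows "(A, C, K1 + K2) \<noteq> alpha_simple N m"
  using assms by (auto simp: alpha_simple_def Rpos_iff Rset_iff)

lemma module_facts:
  assumes "is_module act"
  shows "act (a + b) m = act a m + act b m" "act (a * b) m = act a (act b m)" "act 1 m = m"
    "act a (m + n) = act a m + act a n" "act a 0 = 0" "act a (- m) = - act a m" "act (- a) m = - act a m"
proof -
  show 1: "act (a + b) m = act a m + act b m" "act (a * b) m = act a (act b m)" "act 1 m = m"
    "act a (m + n) = act a m + act a n" using assms by (auto simp: is_module_def)
  have 2: "act a 0 = 0" for a using assms unfolding is_module_def by (metis add_cancel_right_right add_0)
  show "act a 0 = 0" by (rule 2)
  show "act a (- m) = - act a m"
    using assms 2 unfolding is_module_def by (metis add.right_inverse neg_eq_iff_add_eq_0)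
  have 3: "act 0 m = 0" using assms unfolding is_module_def by (metis add_cancel_right_right add_0)
  show "act (- a) m = - act a m"
    using assms 3 unfolding is_module_def by (metis add.right_inverse neg_eq_iff_add_eq_0)
qed

lemma Wbar_sgen: "c \<in> Pi_beta N beta \<Longrightarrow> sgen N c \<in> Wbar_beta N beta"
  using Wbar_beta.step[OF Wbar_beta.one] by simp

lemma xpos_simple:
  assumes N: "2 \<le> N" and wmin: "Wmult P x \<in> Wbeta_min N beta" and gP: "good N P"
    and js: "set js \<subseteq> {..<N}" and x: "x = Wof N js" and len: "lengthW N x = length js"
    and c: "c \<in> Pi_beta N beta"
  shows "Wact_root x (alpha_simple N c) \<in> Rpos N"
proof (rule ccontr)
  assume nn: "\<not> ?thesis"
  have cN: "c < N" using c by (auto simp: Pi_beta_def)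
  have xW: "x \<in> Wset N" using Wof_Wset[OF N js] x by simp
  have PW: "P \<in> Wset N" using gP by (simp add: good_def)
  let ?a = "alpha_simple N c"
  have aR: "?a \<in> Rset N" using alpha_Rset[OF N cN] .
  have xa: "Wact_root x ?a \<in> Rneg N" using nn Rset_cases[OF Wact_root_Rset[OF xW aR]] by blast
  let ?g = "Wact_root x (negr ?a)"
  have gpos: "?g \<in> Rpos N" using xa negr_Rpos Wact_root_Rset[OF xW aR] by (simp add: Wact_root_negr)
  have nneg: "negr ?a \<in> Rneg N" using negr_Rneg aR alpha_Rpos[OF N cN] by (metis negr_Rset negr_negr negr_Rpos)
  have gimg: "?g \<in> Wact_root (Wof N js) ` Rneg N" using nneg x by blast
  obtain u' where u': "length u' + 1 = length js" "set u' \<subseteq> set js" "Wmult (s_root ?g) (Wof N js) = Wof N u'"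
    using exchange[OF N js gpos gimg] by blast
  have "Wmult x (s_root (negr ?a)) = Wmult (s_root ?g) x" using s_root_conj[OF xW] .
  then have xs: "Wmult x (sgen N c) = Wof N u'" using u'(3) x by (simp add: s_root_negr sgen_def)
  have u'N: "set u' \<subseteq> {..<N}" using u'(2) js by auto
  have "lengthW N (Wmult x (sgen N c)) < lengthW N x"
    using word_bound[OF N u'N] u'(1) len xs by auto
  moreover have "lengthW N (Wmult (Wmult P x) (sgen N c)) = lengthW N (Wmult x (sgen N c))"
    using good_length[OF gP Wmult_Wset[OF xW sgen_Wset[OF N cN]]] by (simp add: Wmult_assoc)
  moreover have "lengthW N (Wmult P x) = lengthW N x" using good_length[OF gP xW] .
  moreover have "lengthW N (Wmult P x) \<le> lengthW N (Wmult (Wmult P x) (sgen N c))"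
    using wmin Wbar_sgen[OF c] by (auto simp: Wbeta_min_def)
  ultimately show False by linarith
qed

lemma xpos_block:
  assumes N: "2 \<le> N" and sp: "\<And>c. c \<in> Pi_beta N beta \<Longrightarrow> Wact_root x (alpha_simple N c) \<in> Rpos N"
    and xW: "x \<in> Wset N"
  shows "b = Suc (a + d) \<Longrightarrow> 1 \<le> a \<Longrightarrow> b \<le> N \<Longrightarrow> same_block beta a b \<Longrightarrow> Wact_root x (a, b, 0) \<in> Rpos N"
proof (induction d arbitrary: a)
  case 0
  then have "a \<in> Pi_beta N beta" by (auto simp: Pi_beta_def)
  then show ?case using sp[of a] 0 by (simp add: alpha_simple_def)
next
  case (Suc d)
  have sb1: "same_block beta a (Suc a)" using same_block_sub[OF Suc.prems(4)] Suc.prems by auto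
  have sb2: "same_block beta (Suc a) b" using same_block_sub[OF Suc.prems(4)] Suc.prems by auto
  have p1: "Wact_root x (a, Suc a, 0) \<in> Rpos N"
  proof -
    have "a \<in> Pi_beta N beta" using sb1 Suc.prems by (auto simp: Pi_beta_def)
    then show ?thesis using sp[of a] Suc.prems by (simp add: alpha_simple_def)
  qed
  have p2: "Wact_root x (Suc a, b, 0) \<in> Rpos N" using Suc.IH[of "Suc a"] Suc.prems sb2 by auto
  obtain A B K1 where e1: "Wact_root x (a, Suc a, 0) = (A, B, K1)" by (cases "Wact_root x (a, Suc a, 0)") auto
  obtain B' C K2 where e2: "Wact_root x (Suc a, b, 0) = (B', C, K2)" by (cases "Wact_root x (Suc a, b, 0)") auto
  from act_sum[OF e1 e2] have e3: "B' = B" "Wact_root x (a, b, 0 + 0) = (A, C, K1 + K2)" by auto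
  have "(a, b, 0) \<in> Rset N" using Suc.prems by (auto simp: Rset_def)
  then have "(A, C, K1 + K2) \<in> Rset N" using Wact_root_Rset[OF xW] e3 by (metis add_0)
  then show ?case using pos_sum[of A B K1 N C K2] p1 p2 e1 e2 e3 by simp
qed

theorem lemma2p22:
  fixes N :: nat and beta :: "nat list" and zeta :: "(nat \<Rightarrow> complex) \<times> complex"
    and w :: Welt and i :: nat
    and \<iota> :: "complex \<Rightarrow> 'a::ring_1" and g :: "Welt \<Rightarrow> 'a" and Y :: "nat \<Rightarrow> 'a" and Z :: 'a
    and act :: "'a \<Rightarrow> 'm::ab_group_add \<Rightarrow> 'm" and v :: 'm
  assumes "2 \<le> N"
    and "ordered_partition N beta"
    and "zeta \<in> zeta_beta N beta"
    and "w \<in> Wbeta_min N beta"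
    and "i \<in> {1..N-1}"
    and "(i, Suc i, 0) \<in> Wact_root w ` Rbeta_pos N beta"
    and "dDAHA_hom N \<iota> g Y Z"
    and "is_module act"
    and "\<forall>u \<in> Wbar_beta N beta. act (g u) v = v"
    and "\<forall>xi \<in> tset N. act (hmap \<iota> Y Z N xi) v = act (\<iota> (zeta_eval N zeta xi)) v"
  shows "\<forall>k js. reduced_expr N w k js \<longrightarrow>
           act (g (sgen N i) * phi_expr N \<iota> g Y Z k js) v = act (phi_expr N \<iota> g Y Z k js) v"
proof (intro allI impI)
  fix k js
  assume re: "reduced_expr N w k js"
  note N = assms(1)
  interpret dd N \<iota> g Y Z using assms(1,7) by unfold_locales
  note mf = module_facts[OF assms(8)]
  define P where "P = Wpow (piW N) k"
  define x where "x = Wof N js"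
  have js: "set js \<subseteq> {..<N}" using re by (auto simp: reduced_expr_def)
  have w: "w = Wmult P x" using re by (simp add: reduced_expr_def P_def x_def Wof_def)
  have gP: "good N P" unfolding P_def by (rule good_Wpow[OF N])
  have PW: "P \<in> Wset N" using gP by (simp add: good_def)
  have xW: "x \<in> Wset N" unfolding x_def by (rule Wof_Wset[OF N js])
  have lenx: "lengthW N x = length js"
    using re good_length[OF gP xW] w by (simp add: reduced_expr_def)
  have rjs: "red N js" using js lenx by (simp add: red_def x_def)
  have wmin: "Wmult P x \<in> Wbeta_min N beta" using assms(4) w by simp
  have sp: "Wact_root x (alpha_simple N c) \<in> Rpos N" if "c \<in> Pi_beta N beta" for c
    using xpos_simple[OF N wmin gP js x_def lenx that] .
  obtain rho where rho: "rho \<in> Rbeta_pos N beta" "Wact_root w rho = (i, Suc i, 0)" using assms(6) by auto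
  obtain a b where ab: "rho = (a, b, 0)" "1 \<le> a" "a < b" "b \<le> N" "same_block beta a b"
    using rho(1) by (auto simp: Rbeta_pos_def)
  have iN: "1 \<le> i" "i < N" using assms(5) N by auto
  have ai: "alpha_simple N i = (i, Suc i, 0)" using iN by (simp add: alpha_simple_def)
  obtain i' where i': "i' < N" "Wact_root P (alpha_simple N i') = alpha_simple N i"
    using gP iN unfolding good_def by blast
  have xrho: "Wact_root x rho = alpha_simple N i'"
  proof -
    have "Wact_root P (Wact_root x rho) = Wact_root P (alpha_simple N i')"
      using rho(2) w i'(2) ai by (simp add: Wact_root_mult)
    then show ?thesis using Wact_root_inj[OF PW] by blast
  qed
  have bsuc: "b = Suc a"
  proof (rule ccontr)
    assume "b \<noteq> Suc a"
    then obtain d where d: "b = Suc (Suc a + d)" using ab by (metis less_imp_Suc_add Suc_lessI add_Suc)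
    have sb1: "same_block beta a (Suc a)" using same_block_sub[OF ab(5)] ab d by auto
    have sb2: "same_block beta (Suc a) b" using same_block_sub[OF ab(5)] ab d by auto
    have p1: "Wact_root x (a, Suc a, 0) \<in> Rpos N"
      using xpos_block[OF N sp xW, where b="Suc a" and a=a and d=0] ab d sb1 by auto
    have p2: "Wact_root x (Suc a, b, 0) \<in> Rpos N"
      using xpos_block[OF N sp xW, where b=b and a="Suc a" and d=d] ab d sb2 by auto
    obtain A B K1 where e1: "Wact_root x (a, Suc a, 0) = (A, B, K1)" by (cases "Wact_root x (a, Suc a, 0)") auto
    obtain B' C K2 where e2: "Wact_root x (Suc a, b, 0) = (B', C, K2)" by (cases "Wact_root x (Suc a, b, 0)") auto
    from act_sum[OF e1 e2] have e3: "B' = B" "Wact_root x (a, b, 0 + 0) = (A, C, K1 + K2)" by auto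
    have "(A, C, K1 + K2) = alpha_simple N i'" using xrho ab(1) e3 by simp
    then show False using simple_not_sum[of A B K1 N C K2 i'] p1 p2 e1 e2 e3 i'(1) N by simp
  qed
  define j where "j = a"
  have jPi: "j \<in> Pi_beta N beta" using ab bsuc by (auto simp: Pi_beta_def j_def)
  have jN: "j < N" using jPi by (auto simp: Pi_beta_def)
  have aj: "alpha_simple N j = rho" using ab bsuc jPi by (auto simp: alpha_simple_def j_def Pi_beta_def)
  have xj: "Wact_root x (alpha_simple N j) = alpha_simple N i'" using xrho aj by simp
  have grp: "Wmult x (sgen N j) = Wmult (sgen N i') x"
    using s_root_conj[OF xW, of "alpha_simple N j"] xj by (simp add: sgen_def)
  have "lengthW N (Wmult (sgen N i') x) = lengthW N x + 1"
  proof -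
    have "alpha_simple N i' \<in> Wact_root x ` Rpos N" using xj alpha_Rpos[OF N jN] by (metis image_eqI)
    then show ?thesis using length_left(1)[OF N i'(1) xW] by blast
  qed
  then have r1: "red N (i' # js)" using js i'(1) lenx by (simp add: red_def Wof_Cons x_def)
  have w2: "Wof N (js @ [j]) = Wof N (i' # js)"
    using grp by (simp add: Wof_append Wof_Cons x_def)
  have r2: "red N (js @ [j])" using r1 w2 js jN by (simp add: red_def)
  have FF: "phi i' * Fw phi js = Fw phi js * phi j"
    using phi_matsumoto[OF r1 r2 w2[symmetric]] by (simp add: Fw_append)
  have fold: "foldr (\<lambda>j acc. phi_gen N \<iota> g Y Z j * acc) u 1 = Fw phi u" if "set u \<subseteq> {..<N}" for u
    using that by (induction u) (auto simp: phi_gen_eq)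
  define X where "X = Fw phi js"
  define M where "M = g P * X"
  have pe: "phi_expr N \<iota> g Y Z k js = M"
    by (simp add: phi_expr_def M_def X_def P_def fold[OF js])
  have gi: "ginter P" unfolding P_def by (rule ginter_Wpow)
  have Hcomm: "g P * Hc (alpha_simple N i') = Hc (alpha_simple N i) * g P"
    using gi alpha_Rset[OF N i'(1)] i'(2) by (simp add: ginter_def)
  have Pgrp: "Wmult P (sgen N i') = Wmult (sgen N i) P"
    using s_root_conj[OF PW, of "alpha_simple N i'"] i'(2) by (simp add: sgen_def)
  have Gcomm: "g P * g (sgen N i') = g (sgen N i) * g P"
    using g_mult[OF PW sgen_Wset[OF N i'(1)]] g_mult[OF sgen_Wset[OF N iN(2)] PW] Pgrp by simp
  have phiP: "phi i * g P = g P * phi i'"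
  proof -
    have "g P * phi i' = g P + (g P * g (sgen N i')) * Hc (alpha_simple N i')"
      by (simp add: phi_def algebra_simps)
    also have "\<dots> = g P + g (sgen N i) * (g P * Hc (alpha_simple N i'))" by (simp add: Gcomm mult.assoc)
    also have "\<dots> = phi i * g P" by (simp add: Hcomm phi_def algebra_simps)
    finally show ?thesis by simp
  qed
  have phiM: "phi i * M = M * phi j"
  proof -
    have "phi i * M = (phi i * g P) * X" by (simp add: M_def mult.assoc)
    also have "\<dots> = g P * (phi i' * X)" by (simp add: phiP mult.assoc)
    also have "\<dots> = M * phi j" by (simp add: FF X_def M_def mult.assoc)
    finally show ?thesis .
  qed
  have HM: "Hc (alpha_simple N i) * M = M * Hc (alpha_simple N j)"
  proof -
    have "M * Hc (alpha_simple N j) = g P * (X * Hc (alpha_simple N j))" by (simp add: M_def mult.assoc)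
    also have "\<dots> = g P * (Hc (alpha_simple N i') * X)"
      using Fw_inter[OF js alpha_Rset[OF N jN]] xj by (simp add: X_def x_def)
    also have "\<dots> = Hc (alpha_simple N i) * M" by (simp add: Hcomm M_def mult.assoc[symmetric])
    finally show ?thesis by simp
  qed
  have Hj: "act (Hc (alpha_simple N j)) v = - v"
  proof -
    have jR: "alpha_simple N j \<in> Rset N" using alpha_Rset[OF N jN] .
    have "act (Hc (alpha_simple N j)) v = act (\<iota> (zeta_eval N zeta (coroot (alpha_simple N j)))) v"
      using assms(10) coroot_tset[OF jR] hmap_coroot[OF jR] by metis
    moreover have "zeta_eval N zeta (coroot (alpha_simple N j)) = -1"
    proof -
      have j1: "1 \<le> j" "Suc j \<le> N" using jPi by (auto simp: Pi_beta_def)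
      have "zeta_eval N zeta (coroot (alpha_simple N j)) = (\<Sum>l\<in>{1..N}. fst zeta l * of_int (ind j l - ind (Suc j) l))"
        using j1 by (simp add: zeta_eval_def coroot_def alpha_simple_def)
      also have "\<dots> = (\<Sum>l\<in>{1..N}. (if l = j then fst zeta l else 0) - (if l = Suc j then fst zeta l else 0))"
        by (intro sum.cong refl) (auto simp: ind_def)
      also have "\<dots> = fst zeta j - fst zeta (Suc j)" using j1 by (simp add: sum_subtractf)
      also have "\<dots> = -1" using assms(3) jPi by (simp add: zeta_beta_def)
      finally show ?thesis .
    qed
    moreover have "\<iota> (-1) = -1" using iota_uminus iota_one by simp
    ultimately show ?thesis using mf(3)[of v] mf(7)[of 1 v] by simp
  qed
  have Gj: "act (g (sgen N j)) v = v" using assms(9) Wbar_sgen[OF jPi] by blast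
  have phij: "act (phi j) v = 0"
    using Hj Gj by (simp add: phi_def mf(1) mf(2) mf(3) mf(6))
  have "act (phi i * M) v = 0" using phij by (simp add: phiM mf(2) mf(5))
  moreover have "act (phi i * M) v = act M v - act (g (sgen N i) * M) v"
  proof -
    have "phi i * M = M + (g (sgen N i) * M) * Hc (alpha_simple N j)"
      by (simp add: phi_def algebra_simps HM mult.assoc)
    then show ?thesis by (simp add: mf(1) mf(2) Hj mf(6))
  qed
  ultimately have "act (g (sgen N i) * M) v = act M v" by simp
  then show "act (g (sgen N i) * phi_expr N \<iota> g Y Z k js) v = act (phi_expr N \<iota> g Y Z k js) v"
    by (simp add: pe)
qed


end
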